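(* Let $A$ and $B$ be strongly regular graphs with the same parameters $(n,d,\lambda,\mu)$ (possibly $A\cong B$). Let $A'$ and $B'$ be partially colored versions in which the colored vertices are $a_1,\dots,a_m\in V(A)$ and $b_1,\dots,b_m\in V(B)$, with $a_i$ and $b_i$ both colored $i$, each color $1,\dots,m$ occurring exactly once in each graph and all other vertices uncolored. Let $G=G(A',B')$ and $H=G(A',A')$ (the latter built from two vertex-disjoint copies of $A'$). (1) If $\mathrm{WL}_1(A')\ne\mathrm{WL}_1(B')$, then $\mathrm{WL}_1(G)\ne\mathrm{WL}_1(H)$. (2) If for some $r\ge1$ the multisets of 1-WL colors after $r$ rounds coincide, $\{\!\{C^r_{A'}(x)\}\!\}_{x\in V(A)}=\{\!\{C^r_{B'}(x)\}\!\}_{x\in V(B)}$, then $\omega^{(r-1)}(G)=\omega^{(r-1)}(H)$.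
   Context: Graphs are finite, simple and undirected. A strongly regular graph with parameters $(n,d,\lambda,\mu)$ is an $n$-vertex $d$-regular graph in which any two adjacent vertices have $\lambda$ common neighbours and any two distinct non-adjacent vertices have $\mu$ common neighbours. Construction $G(A',B')$ (uncolored graph): take the vertex-disjoint union of $A$ and $B$; for each $i=1,\dots,m$ add a new connecting vertex $c_i$ adjacent to $a_i$ and $b_i$, and $i$ new pendant vertices $p_{i,1},\dots,p_{i,i}$, each of degree $1$ and adjacent only to $c_i$. All colors are discarded. Color refinement (1-WL) on a vertex-colored graph $X$ with $N$ vertices: $C^0_X(x)$ is the color of $x$ (a common default color for uncolored vertices), $C^{r+1}_X(x)=\big(C^r_X(x),\{\!\{C^r_X(y)\}\!\}_{y\in N(x)}\big)$, with $\{\!\{\cdot\}\!\}$ a multiset; $\mathrm{WL}_1(X)=\{\!\{C^N_X(x)\}\!\}_{x\in V(X)}$. Let $w_k(x,y)$ be the number of walks of length $k$ from $x$ to $y$ in an $N$-vertex graph and $w_*(x,y)=(w_0(x,y),\dots,w_{N-1}(x,y))$. Define $\omega_0(x)=w_*(x,x)$, $\omega_{r+1}(x)=\big(\omega_r(x),\{\!\{(w_*(x,y),\omega_r(y))\}\!\}_{y}\big)$ and $\omega^{(r)}(G)=\{\!\{\omega_r(x)\}\!\}_{x\in V(G)}$. *)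

theory Defs
  imports Main "HOL-Library.Multiset"
begin

definition nbrs :: "'v set \<Rightarrow> ('v \<Rightarrow> 'v \<Rightarrow> bool) \<Rightarrow> 'v \<Rightarrow> 'v set" where
  "nbrs V E x = {y \<in> V. E x y}"

definition srg :: "'v set \<Rightarrow> ('v \<Rightarrow> 'v \<Rightarrow> bool) \<Rightarrow> nat \<Rightarrow> nat \<Rightarrow> nat \<Rightarrow> nat \<Rightarrow> bool" where
  "srg V E n d l mu \<longleftrightarrow>
     finite V \<and> card V = n \<and>
     (\<forall>x y. E x y \<longrightarrow> x \<in> V \<and> y \<in> V) \<and>
     (\<forall>x y. E x y \<longrightarrow> E y x) \<and> (\<forall>x. \<not> E x x) \<and>
     (\<forall>x\<in>V. card (nbrs V E x) = d) \<and>
     (\<forall>x\<in>V. \<forall>y\<in>V. x \<noteq> y \<and> E x y \<longrightarrow> card {z\<in>V. E x z \<and> E y z} = l) \<and>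
     (\<forall>x\<in>V. \<forall>y\<in>V. x \<noteq> y \<and> \<not> E x y \<longrightarrow> card {z\<in>V. E x z \<and> E y z} = mu)"

text \<open>Partial colouring: a i gets colour i (1 \<le> i \<le> m); uncoloured vertices get the default colour 0.\<close>

definition col_of :: "(nat \<Rightarrow> 'v) \<Rightarrow> nat \<Rightarrow> 'v \<Rightarrow> nat" where
  "col_of a m x = (if \<exists>i. 1 \<le> i \<and> i \<le> m \<and> a i = x
                   then (THE i. 1 \<le> i \<and> i \<le> m \<and> a i = x) else 0)"

datatype wlc = WLInit nat | WLStep wlc "wlc multiset"

fun cr :: "'v set \<Rightarrow> ('v \<Rightarrow> 'v \<Rightarrow> bool) \<Rightarrow> ('v \<Rightarrow> nat) \<Rightarrow> nat \<Rightarrow> 'v \<Rightarrow> wlc" where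
  "cr V E c 0 x = WLInit (c x)"
| "cr V E c (Suc r) x = WLStep (cr V E c r x) (image_mset (cr V E c r) (mset_set (nbrs V E x)))"

definition WL1 :: "'v set \<Rightarrow> ('v \<Rightarrow> 'v \<Rightarrow> bool) \<Rightarrow> ('v \<Rightarrow> nat) \<Rightarrow> wlc multiset" where
  "WL1 V E c = image_mset (cr V E c (card V)) (mset_set V)"

datatype ('a, 'b) cv = LV 'a | RV 'b | CV nat | PV nat nat

definition constr_V :: "'a set \<Rightarrow> 'b set \<Rightarrow> nat \<Rightarrow> ('a, 'b) cv set" where
  "constr_V VA VB m = LV ` VA \<union> RV ` VB \<union> CV ` {1..m} \<union>
     {PV i j | i j. 1 \<le> i \<and> i \<le> m \<and> 1 \<le> j \<and> j \<le> i}"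

fun constr_E0 :: "('a \<Rightarrow> 'a \<Rightarrow> bool) \<Rightarrow> ('b \<Rightarrow> 'b \<Rightarrow> bool) \<Rightarrow> (nat \<Rightarrow> 'a) \<Rightarrow> (nat \<Rightarrow> 'b) \<Rightarrow> nat
    \<Rightarrow> ('a, 'b) cv \<Rightarrow> ('a, 'b) cv \<Rightarrow> bool" where
  "constr_E0 EA EB a b m (LV x) (LV y) = EA x y"
| "constr_E0 EA EB a b m (RV x) (RV y) = EB x y"
| "constr_E0 EA EB a b m (CV i) (LV x) = (1 \<le> i \<and> i \<le> m \<and> x = a i)"
| "constr_E0 EA EB a b m (CV i) (RV y) = (1 \<le> i \<and> i \<le> m \<and> y = b i)"
| "constr_E0 EA EB a b m (PV i j) (CV k) = (k = i \<and> 1 \<le> i \<and> i \<le> m \<and> 1 \<le> j \<and> j \<le> i)"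
| "constr_E0 EA EB a b m _ _ = False"

definition constr_E :: "('a \<Rightarrow> 'a \<Rightarrow> bool) \<Rightarrow> ('b \<Rightarrow> 'b \<Rightarrow> bool) \<Rightarrow> (nat \<Rightarrow> 'a) \<Rightarrow> (nat \<Rightarrow> 'b) \<Rightarrow> nat
    \<Rightarrow> ('a, 'b) cv \<Rightarrow> ('a, 'b) cv \<Rightarrow> bool" where
  "constr_E EA EB a b m x y = (constr_E0 EA EB a b m x y \<or> constr_E0 EA EB a b m y x)"

fun walks :: "'v set \<Rightarrow> ('v \<Rightarrow> 'v \<Rightarrow> bool) \<Rightarrow> nat \<Rightarrow> 'v \<Rightarrow> 'v \<Rightarrow> nat" where
  "walks V E 0 x y = (if x = y then 1 else 0)"
| "walks V E (Suc k) x y = (\<Sum>z\<in>nbrs V E x. walks V E k z y)"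

definition wstar :: "'v set \<Rightarrow> ('v \<Rightarrow> 'v \<Rightarrow> bool) \<Rightarrow> 'v \<Rightarrow> 'v \<Rightarrow> nat list" where
  "wstar V E x y = map (\<lambda>k. walks V E k x y) [0..<card V]"

datatype omc = OmInit "nat list" | OmStep omc "(nat list \<times> omc) multiset"

fun omega :: "'v set \<Rightarrow> ('v \<Rightarrow> 'v \<Rightarrow> bool) \<Rightarrow> nat \<Rightarrow> 'v \<Rightarrow> omc" where
  "omega V E 0 x = OmInit (wstar V E x x)"
| "omega V E (Suc r) x = OmStep (omega V E r x) (image_mset (\<lambda>y. (wstar V E x y, omega V E r y)) (mset_set V))"

definition omega_ms :: "'v set \<Rightarrow> ('v \<Rightarrow> 'v \<Rightarrow> bool) \<Rightarrow> nat \<Rightarrow> omc multiset" where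
  "omega_ms V E r = image_mset (omega V E r) (mset_set V)"

end

theory Submission
  imports Defs
begin

lemma mem_constr_V[simp]:
  "LV x \<in> constr_V VA VB m \<longleftrightarrow> x \<in> VA"
  "RV y \<in> constr_V VA VB m \<longleftrightarrow> y \<in> VB"
  "CV i \<in> constr_V VA VB m \<longleftrightarrow> 1 \<le> i \<and> i \<le> m"
  "PV i j \<in> constr_V VA VB m \<longleftrightarrow> 1 \<le> i \<and> i \<le> m \<and> 1 \<le> j \<and> j \<le> i"
  by (auto simp: constr_V_def)

locale cg =
  fixes VA :: "'a set" and EA and VB :: "'b set" and EB and a :: "nat \<Rightarrow> 'a" and b :: "nat \<Rightarrow> 'b"
    and m n d l mu :: nat
  assumes srgA: "srg VA EA n d l mu" and srgB: "srg VB EB n d l mu"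
    and a_in: "a ` {1..m} \<subseteq> VA" and a_inj: "inj_on a {1..m}"
    and b_in: "b ` {1..m} \<subseteq> VB" and b_inj: "inj_on b {1..m}"
begin

abbreviation "V \<equiv> constr_V VA VB m"
abbreviation "E \<equiv> constr_E EA EB a b m"

lemma finA: "finite VA" and cardA: "card VA = n" and EA_in: "EA x y \<Longrightarrow> x \<in> VA \<and> y \<in> VA"
  and EA_sym: "EA x y \<Longrightarrow> EA y x" and EA_irr: "\<not> EA x x"
  and degA: "x \<in> VA \<Longrightarrow> card (nbrs VA EA x) = d"
  and lA: "x \<in> VA \<Longrightarrow> y \<in> VA \<Longrightarrow> x \<noteq> y \<Longrightarrow> EA x y \<Longrightarrow> card {z\<in>VA. EA x z \<and> EA y z} = l"
  and muA: "x \<in> VA \<Longrightarrow> y \<in> VA \<Longrightarrow> x \<noteq> y \<Longrightarrow> \<not> EA x y \<Longrightarrow> card {z\<in>VA. EA x z \<and> EA y z} = mu"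
  using srgA unfolding srg_def by blast+

lemma finB: "finite VB" and cardB: "card VB = n" and EB_in: "EB x y \<Longrightarrow> x \<in> VB \<and> y \<in> VB"
  and EB_sym: "EB x y \<Longrightarrow> EB y x" and EB_irr: "\<not> EB x x"
  and degB: "x \<in> VB \<Longrightarrow> card (nbrs VB EB x) = d"
  and lB: "x \<in> VB \<Longrightarrow> y \<in> VB \<Longrightarrow> x \<noteq> y \<Longrightarrow> EB x y \<Longrightarrow> card {z\<in>VB. EB x z \<and> EB y z} = l"
  and muB: "x \<in> VB \<Longrightarrow> y \<in> VB \<Longrightarrow> x \<noteq> y \<Longrightarrow> \<not> EB x y \<Longrightarrow> card {z\<in>VB. EB x z \<and> EB y z} = mu"
  using srgB unfolding srg_def by blast+

lemma E_sym: "E x y = E y x" by (auto simp: constr_E_def)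

lemma finV: "finite V"
proof -
  have "{PV i j | i j. 1 \<le> i \<and> i \<le> m \<and> 1 \<le> j \<and> j \<le> i} \<subseteq> (\<lambda>(i,j). PV i j) ` ({1..m} \<times> {1..m})"
    by auto
  hence "finite {PV i j | i j. 1 \<le> i \<and> i \<le> m \<and> 1 \<le> j \<and> j \<le> i}"
    using finite_subset by blast
  thus ?thesis using finA finB by (simp add: constr_V_def)
qed

lemma nbrs_LV: "x \<in> VA \<Longrightarrow> nbrs V E (LV x) = LV ` nbrs VA EA x \<union> CV ` {i\<in>{1..m}. a i = x}"
  unfolding nbrs_def constr_E_def
  apply (rule set_eqI)
  subgoal for z by (cases z) (auto dest: EA_in EA_sym)
  done

lemma nbrs_RV: "y \<in> VB \<Longrightarrow> nbrs V E (RV y) = RV ` nbrs VB EB y \<union> CV ` {i\<in>{1..m}. b i = y}"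
  unfolding nbrs_def constr_E_def
  apply (rule set_eqI)
  subgoal for z by (cases z) (auto dest: EB_in EB_sym)
  done

lemma nbrs_CV: "1 \<le> i \<Longrightarrow> i \<le> m \<Longrightarrow> nbrs V E (CV i) = {LV (a i), RV (b i)} \<union> (PV i) ` {1..i}"
  unfolding nbrs_def constr_E_def
  apply (rule set_eqI)
  subgoal for z using a_in b_in by (cases z) auto
  done

lemma nbrs_PV: "1 \<le> i \<Longrightarrow> i \<le> m \<Longrightarrow> 1 \<le> j \<Longrightarrow> j \<le> i \<Longrightarrow> nbrs V E (PV i j) = {CV i}"
  unfolding nbrs_def constr_E_def
  apply (rule set_eqI)
  subgoal for z by (cases z) auto
  done

end

datatype bidx = BE | BN | BOL | BOR | BAL nat | BNAL nat | BBR nat | BNBR nat | BC nat | BP nat nat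
datatype kind = KL nat "nat set" | KR nat "nat set" | KC nat | KP nat nat

definition evl :: "(bidx \<Rightarrow> 'v \<Rightarrow> int) \<Rightarrow> (int \<times> bidx) list \<Rightarrow> 'v \<Rightarrow> int" where
  "evl f xs x = sum_list (map (\<lambda>(c,\<beta>). c * f \<beta> x) xs)"

lemma evl_Nil[simp]: "evl f [] x = 0" by (simp add: evl_def)
lemma evl_Cons[simp]: "evl f ((c,\<beta>)#xs) x = c * f \<beta> x + evl f xs x" by (simp add: evl_def)
lemma evl_append[simp]: "evl f (xs @ ys) x = evl f xs x + evl f ys x" by (simp add: evl_def)
lemma evl_scale: "evl f (map (\<lambda>(c',\<gamma>). (c*c',\<gamma>)) xs) x = c * evl f xs x"
  by (induction xs) (auto simp: algebra_simps)
lemma evl_map: "distinct xs \<Longrightarrow> evl f (map (\<lambda>i. (1, g i)) xs) x = (\<Sum>i\<in>set xs. f (g i) x)"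
  by (simp add: evl_def sum_list_distinct_conv_sum_set)

primrec Tm :: "nat \<Rightarrow> nat \<Rightarrow> nat \<Rightarrow> nat \<Rightarrow> (nat \<Rightarrow> nat \<Rightarrow> bool) \<Rightarrow> (nat \<Rightarrow> nat \<Rightarrow> bool) \<Rightarrow> kind
   \<Rightarrow> bidx \<Rightarrow> (int \<times> bidx) list" where
  "Tm d l mu m DA DB \<kappa> BE = (case \<kappa> of
      KL c S \<Rightarrow> (1,BN) # (if c \<noteq> 0 then [(1, BC c)] else [])
    | KR c S \<Rightarrow> (1,BN) # (if c \<noteq> 0 then [(1, BC c)] else [])
    | KC i \<Rightarrow> [(1,BAL i),(1,BBR i)] @ map (\<lambda>j. (1,BP i j)) [1..<i+1]
    | KP i j \<Rightarrow> [(1,BC i)])"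
| "Tm d l mu m DA DB \<kappa> BN = (case \<kappa> of
      KL c S \<Rightarrow> [(int d - int mu, BE), (int l - int mu, BN), (int mu, BOL)]
        @ map (\<lambda>i. (1,BC i)) (filter (\<lambda>i. i \<in> S) [1..<m+1])
    | KR c S \<Rightarrow> [(int d - int mu, BE), (int l - int mu, BN), (int mu, BOR)]
        @ map (\<lambda>i. (1,BC i)) (filter (\<lambda>i. i \<in> S) [1..<m+1])
    | KC i \<Rightarrow> []
    | KP i j \<Rightarrow> [])"
| "Tm d l mu m DA DB \<kappa> BOL = (int d, BOL) # map (\<lambda>i. (1,BC i)) [1..<m+1]"
| "Tm d l mu m DA DB \<kappa> BOR = (int d, BOR) # map (\<lambda>i. (1,BC i)) [1..<m+1]"
| "Tm d l mu m DA DB \<kappa> (BAL i) = [(1, BNAL i), (1, BC i)]"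
| "Tm d l mu m DA DB \<kappa> (BNAL i) = (if 1 \<le> i \<and> i \<le> m then
      [(int d - int mu, BAL i), (int l - int mu, BNAL i), (int mu, BOL)]
      @ map (\<lambda>j. (1,BC j)) (filter (\<lambda>j. DA i j) [1..<m+1]) else [])"
| "Tm d l mu m DA DB \<kappa> (BBR i) = [(1, BNBR i), (1, BC i)]"
| "Tm d l mu m DA DB \<kappa> (BNBR i) = (if 1 \<le> i \<and> i \<le> m then
      [(int d - int mu, BBR i), (int l - int mu, BNBR i), (int mu, BOR)]
      @ map (\<lambda>j. (1,BC j)) (filter (\<lambda>j. DB i j) [1..<m+1]) else [])"
| "Tm d l mu m DA DB \<kappa> (BC i) = [(1,BAL i),(1,BBR i)] @ map (\<lambda>j. (1,BP i j)) [1..<i+1]"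
| "Tm d l mu m DA DB \<kappa> (BP i j) = (if 1 \<le> j \<and> j \<le> i \<and> 1 \<le> i \<and> i \<le> m then [(1,BC i)] else [])"

definition stp where
  "stp d l mu m DA DB \<kappa> xs = concat (map (\<lambda>(c,\<beta>). map (\<lambda>(c',\<gamma>). (c*c',\<gamma>)) (Tm d l mu m DA DB \<kappa> \<beta>)) xs)"

fun coefs where
  "coefs d l mu m DA DB \<kappa> 0 = [(1,BE)]"
| "coefs d l mu m DA DB \<kappa> (Suc k) = stp d l mu m DA DB \<kappa> (coefs d l mu m DA DB \<kappa> k)"

lemma col_of_eq: assumes inj: "inj_on a {1..m}" and i: "1 \<le> i" "i \<le> m"
  shows "col_of a m x = i \<longleftrightarrow> a i = x"
proof
  assume "a i = x"
  hence ex: "\<exists>i. 1 \<le> i \<and> i \<le> m \<and> a i = x" using i by blast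
  have "(THE i. 1 \<le> i \<and> i \<le> m \<and> a i = x) = i"
    apply (rule the_equality)
    using i \<open>a i = x\<close> apply blast
    using inj i \<open>a i = x\<close> by (metis atLeastAtMost_iff inj_onD)
  thus "col_of a m x = i" using ex by (simp add: col_of_def)
next
  assume c: "col_of a m x = i"
  have ex: "\<exists>i. 1 \<le> i \<and> i \<le> m \<and> a i = x"
    using c i by (auto simp: col_of_def split: if_splits)
  then obtain j where j: "1 \<le> j" "j \<le> m" "a j = x" by blast
  have "(THE i. 1 \<le> i \<and> i \<le> m \<and> a i = x) = j"
    apply (rule the_equality)
    using j apply blast
    using inj j by (metis atLeastAtMost_iff inj_onD)
  with c ex j show "a i = x" by (simp add: col_of_def)
qed

lemma col_of_range: assumes "inj_on a {1..m}"
  shows "col_of a m x = 0 \<or> (1 \<le> col_of a m x \<and> col_of a m x \<le> m \<and> a (col_of a m x) = x)"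
proof (cases "\<exists>i. 1 \<le> i \<and> i \<le> m \<and> a i = x")
  case True
  then obtain i where i: "1 \<le> i" "i \<le> m" "a i = x" by blast
  hence "col_of a m x = i" using col_of_eq[OF assms i(1,2)] by simp
  thus ?thesis using i by simp
next
  case False
  hence "col_of a m x = 0" unfolding col_of_def by (rule if_not_P)
  thus ?thesis by simp
qed

context cg begin

fun sadj where
  "sadj (LV t) (LV s) = EA t s"
| "sadj (RV t) (RV s) = EB t s"
| "sadj _ _ = False"

fun bas :: "('a,'b) cv \<Rightarrow> bidx \<Rightarrow> ('a,'b) cv \<Rightarrow> int" where
  "bas y BE x = of_bool (x = y)"
| "bas y BN x = of_bool (sadj y x)"
| "bas y BOL x = of_bool (\<exists>s. x = LV s)"
| "bas y BOR x = of_bool (\<exists>s. x = RV s)"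
| "bas y (BAL i) x = of_bool (1 \<le> i \<and> i \<le> m \<and> x = LV (a i))"
| "bas y (BNAL i) x = of_bool (1 \<le> i \<and> i \<le> m \<and> (\<exists>s. x = LV s \<and> EA (a i) s))"
| "bas y (BBR i) x = of_bool (1 \<le> i \<and> i \<le> m \<and> x = RV (b i))"
| "bas y (BNBR i) x = of_bool (1 \<le> i \<and> i \<le> m \<and> (\<exists>s. x = RV s \<and> EB (b i) s))"
| "bas y (BC i) x = of_bool (x = CV i)"
| "bas y (BP i j) x = of_bool (x = PV i j)"


definition kd :: "('a,'b) cv \<Rightarrow> kind" where
  "kd y = (case y of LV t \<Rightarrow> KL (col_of a m t) {i\<in>{1..m}. EA (a i) t}
     | RV t \<Rightarrow> KR (col_of b m t) {i\<in>{1..m}. EB (b i) t}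
     | CV i \<Rightarrow> KC i | PV i j \<Rightarrow> KP i j)"

abbreviation "DAa \<equiv> (\<lambda>i j. 1 \<le> i \<and> i \<le> m \<and> 1 \<le> j \<and> j \<le> m \<and> EA (a i) (a j))"
abbreviation "DBb \<equiv> (\<lambda>i j. 1 \<le> i \<and> i \<le> m \<and> 1 \<le> j \<and> j \<le> m \<and> EB (b i) (b j))"
abbreviation "T \<equiv> Tm d l mu m DAa DBb"

lemma fin_nbrsA: "finite (nbrs VA EA s)" using finA by (simp add: nbrs_def)
lemma fin_nbrsB: "finite (nbrs VB EB s)" using finB by (simp add: nbrs_def)

lemma colsetA: "{i\<in>{1..m}. a i = s} = (if col_of a m s = 0 then {} else {col_of a m s})"
proof (rule set_eqI)
  fix i
  show "i \<in> {i\<in>{1..m}. a i = s} \<longleftrightarrow> i \<in> (if col_of a m s = 0 then {} else {col_of a m s})"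
  proof
    assume "i \<in> {i\<in>{1..m}. a i = s}"
    hence i: "1 \<le> i" "i \<le> m" "a i = s" by auto
    hence "col_of a m s = i" using col_of_eq[OF a_inj i(1,2)] by simp
    thus "i \<in> (if col_of a m s = 0 then {} else {col_of a m s})" using i by auto
  next
    assume "i \<in> (if col_of a m s = 0 then {} else {col_of a m s})"
    thus "i \<in> {i\<in>{1..m}. a i = s}" using col_of_range[OF a_inj, of s]
      by (auto split: if_splits)
  qed
qed
lemma colsetB: "{i\<in>{1..m}. b i = s} = (if col_of b m s = 0 then {} else {col_of b m s})"
proof (rule set_eqI)
  fix i
  show "i \<in> {i\<in>{1..m}. b i = s} \<longleftrightarrow> i \<in> (if col_of b m s = 0 then {} else {col_of b m s})"
  proof
    assume "i \<in> {i\<in>{1..m}. b i = s}"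
    hence i: "1 \<le> i" "i \<le> m" "b i = s" by auto
    hence "col_of b m s = i" using col_of_eq[OF b_inj i(1,2)] by simp
    thus "i \<in> (if col_of b m s = 0 then {} else {col_of b m s})" using i by auto
  next
    assume "i \<in> (if col_of b m s = 0 then {} else {col_of b m s})"
    thus "i \<in> {i\<in>{1..m}. b i = s}" using col_of_range[OF b_inj, of s]
      by (auto split: if_splits)
  qed
qed

lemma sum_LV: "s \<in> VA \<Longrightarrow> (\<Sum>z\<in>nbrs V E (LV s). f z) =
   (\<Sum>t\<in>nbrs VA EA s. f (LV t)) + (if col_of a m s = 0 then 0 else f (CV (col_of a m s)))"
  apply (subst nbrs_LV, assumption)
  apply (subst colsetA)
  apply (cases "col_of a m s = 0")
   apply (simp add: sum.reindex inj_on_def comp_def)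
  apply simp
  apply (subst sum.insert)
    apply (auto simp: fin_nbrsA sum.reindex inj_on_def comp_def add.commute)
  done

lemma sum_RV: "s \<in> VB \<Longrightarrow> (\<Sum>z\<in>nbrs V E (RV s). f z) =
   (\<Sum>t\<in>nbrs VB EB s. f (RV t)) + (if col_of b m s = 0 then 0 else f (CV (col_of b m s)))"
  apply (subst nbrs_RV, assumption)
  apply (subst colsetB)
  apply (cases "col_of b m s = 0")
   apply (simp add: sum.reindex inj_on_def comp_def)
  apply simp
  apply (subst sum.insert)
    apply (auto simp: fin_nbrsB sum.reindex inj_on_def comp_def add.commute)
  done

lemma sum_CV: "1 \<le> k \<Longrightarrow> k \<le> m \<Longrightarrow> (\<Sum>z\<in>nbrs V E (CV k). f z) =
   f (LV (a k)) + f (RV (b k)) + (\<Sum>j\<in>{1..k}. f (PV k j))"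
proof -
  assume k: "1 \<le> k" "k \<le> m"
  have "nbrs V E (CV k) = insert (LV (a k)) (insert (RV (b k)) (PV k ` {1..k}))"
    using nbrs_CV[OF k] by auto
  moreover have "(\<Sum>z\<in>insert (LV (a k)) (insert (RV (b k)) (PV k ` {1..k})). f z) =
     f (LV (a k)) + (f (RV (b k)) + (\<Sum>z\<in>PV k ` {1..k}. f z))"
    by (subst sum.insert, auto)+
  moreover have "(\<Sum>z\<in>PV k ` {1..k}. f z) = (\<Sum>j\<in>{1..k}. f (PV k j))"
    by (rule sum.reindex_cong[where l="PV k"]) (auto simp: inj_on_def)
  ultimately show ?thesis by (simp add: add.assoc)
qed

lemma sum_PV: "1 \<le> k \<Longrightarrow> k \<le> m \<Longrightarrow> 1 \<le> j \<Longrightarrow> j \<le> k \<Longrightarrow> (\<Sum>z\<in>nbrs V E (PV k j). f z) = f (CV k)"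
  by (simp add: nbrs_PV)

lemma srg_countA: assumes "s \<in> VA" "t0 \<in> VA"
  shows "(\<Sum>t\<in>nbrs VA EA s. (of_bool (EA t0 t)::int)) =
     (int d - int mu) * of_bool (s = t0) + (int l - int mu) * of_bool (EA t0 s) + int mu"
proof -
  have "(\<Sum>t\<in>nbrs VA EA s. (of_bool (EA t0 t)::int)) = int (card {z\<in>VA. EA s z \<and> EA t0 z})"
  proof -
    have "(\<Sum>t\<in>nbrs VA EA s. (of_bool (EA t0 t)::int)) = of_nat (card (nbrs VA EA s \<inter> {t. EA t0 t}))"
      by (rule sum_of_bool_eq[OF fin_nbrsA fin_nbrsA])
    moreover have "nbrs VA EA s \<inter> {t. EA t0 t} = {z\<in>VA. EA s z \<and> EA t0 z}" by (auto simp: nbrs_def)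
    ultimately show ?thesis by simp
  qed
  also have "\<dots> = (int d - int mu) * of_bool (s = t0) + (int l - int mu) * of_bool (EA t0 s) + int mu"
  proof (cases "s = t0")
    case True
    hence "{z\<in>VA. EA s z \<and> EA t0 z} = nbrs VA EA s" by (auto simp: nbrs_def)
    thus ?thesis using True degA[OF assms(1)] EA_irr by simp
  next
    case False
    show ?thesis
    proof (cases "EA t0 s")
      case True
      thus ?thesis using lA[OF assms False] False EA_sym by simp
    next
      case F2: False
      thus ?thesis using muA[OF assms False] False EA_sym by auto
    qed
  qed
  finally show ?thesis .
qed

lemma srg_countB: assumes "s \<in> VB" "t0 \<in> VB"
  shows "(\<Sum>t\<in>nbrs VB EB s. (of_bool (EB t0 t)::int)) =
     (int d - int mu) * of_bool (s = t0) + (int l - int mu) * of_bool (EB t0 s) + int mu"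
proof -
  have "(\<Sum>t\<in>nbrs VB EB s. (of_bool (EB t0 t)::int)) = int (card {z\<in>VB. EB s z \<and> EB t0 z})"
  proof -
    have "(\<Sum>t\<in>nbrs VB EB s. (of_bool (EB t0 t)::int)) = of_nat (card (nbrs VB EB s \<inter> {t. EB t0 t}))"
      by (rule sum_of_bool_eq[OF fin_nbrsB fin_nbrsB])
    moreover have "nbrs VB EB s \<inter> {t. EB t0 t} = {z\<in>VB. EB s z \<and> EB t0 z}" by (auto simp: nbrs_def)
    ultimately show ?thesis by simp
  qed
  also have "\<dots> = (int d - int mu) * of_bool (s = t0) + (int l - int mu) * of_bool (EB t0 s) + int mu"
  proof (cases "s = t0")
    case True
    hence "{z\<in>VB. EB s z \<and> EB t0 z} = nbrs VB EB s" by (auto simp: nbrs_def)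
    thus ?thesis using True degB[OF assms(1)] EB_irr by simp
  next
    case False
    show ?thesis
    proof (cases "EB t0 s")
      case True
      thus ?thesis using lB[OF assms False] False EB_sym by simp
    next
      case F2: False
      thus ?thesis using muB[OF assms False] False EB_sym by auto
    qed
  qed
  finally show ?thesis .
qed


lemma sum_delta_bool[simp]: "finite A \<Longrightarrow> (\<Sum>t\<in>A. (of_bool (t = c)::int)) = of_bool (c \<in> A)"
  by (simp add: sum_of_bool_eq)
lemma sum_delta_bool'[simp]: "finite A \<Longrightarrow> (\<Sum>t\<in>A. (of_bool (c = t)::int)) = of_bool (c \<in> A)"
  by (simp add: sum_of_bool_eq)

lemma mem_nbrsA: "t \<in> nbrs VA EA s \<longleftrightarrow> EA s t"
  using EA_in by (auto simp: nbrs_def)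
lemma mem_nbrsB: "t \<in> nbrs VB EB s \<longleftrightarrow> EB s t"
  using EB_in by (auto simp: nbrs_def)

lemma degA': "s \<in> VA \<Longrightarrow> (\<Sum>t\<in>nbrs VA EA s. (1::int)) = int d" using degA by simp
lemma degB': "s \<in> VB \<Longrightarrow> (\<Sum>t\<in>nbrs VB EB s. (1::int)) = int d" using degB by simp

lemma colA_eq[simp]: "1 \<le> i \<Longrightarrow> i \<le> m \<Longrightarrow> col_of a m x = i \<longleftrightarrow> a i = x"
  by (rule col_of_eq[OF a_inj])
lemma colB_eq[simp]: "1 \<le> i \<Longrightarrow> i \<le> m \<Longrightarrow> col_of b m x = i \<longleftrightarrow> b i = x"
  by (rule col_of_eq[OF b_inj])
lemma colA_ai[simp]: "1 \<le> i \<Longrightarrow> i \<le> m \<Longrightarrow> col_of a m (a i) = i" by simp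
lemma colB_bi[simp]: "1 \<le> i \<Longrightarrow> i \<le> m \<Longrightarrow> col_of b m (b i) = i" by simp
lemma colA_nz: "col_of a m s \<noteq> 0 \<Longrightarrow> 1 \<le> col_of a m s \<and> col_of a m s \<le> m \<and> a (col_of a m s) = s"
proof -
  assume h: "col_of a m s \<noteq> 0"
  have "col_of a m s = 0 \<or> (1 \<le> col_of a m s \<and> col_of a m s \<le> m \<and> a (col_of a m s) = s)"
    by (rule col_of_range[OF a_inj])
  with h show ?thesis by (simp only: simp_thms)
qed
lemma colB_nz: "col_of b m s \<noteq> 0 \<Longrightarrow> 1 \<le> col_of b m s \<and> col_of b m s \<le> m \<and> b (col_of b m s) = s"
proof -
  assume h: "col_of b m s \<noteq> 0"
  have "col_of b m s = 0 \<or> (1 \<le> col_of b m s \<and> col_of b m s \<le> m \<and> b (col_of b m s) = s)"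
    by (rule col_of_range[OF b_inj])
  with h show ?thesis by (simp only: simp_thms)
qed
lemma a_inj_eq[simp]: "1 \<le> i \<Longrightarrow> i \<le> m \<Longrightarrow> 1 \<le> j \<Longrightarrow> j \<le> m \<Longrightarrow> a i = a j \<longleftrightarrow> i = j"
  by (rule inj_on_eq_iff[OF a_inj]) simp_all
lemma b_inj_eq[simp]: "1 \<le> i \<Longrightarrow> i \<le> m \<Longrightarrow> 1 \<le> j \<Longrightarrow> j \<le> m \<Longrightarrow> b i = b j \<longleftrightarrow> i = j"
  by (rule inj_on_eq_iff[OF b_inj]) simp_all
lemma a_inV: "1 \<le> i \<Longrightarrow> i \<le> m \<Longrightarrow> a i \<in> VA" using a_in by (simp add: image_subset_iff)
lemma b_inV: "1 \<le> i \<Longrightarrow> i \<le> m \<Longrightarrow> b i \<in> VB" using b_in by (simp add: image_subset_iff)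

lemma col_casesA: obtains "col_of a m s = 0" | i where "1 \<le> i" "i \<le> m" "s = a i"
proof (cases "col_of a m s = 0")
  case False
  from colA_nz[OF False] show ?thesis using that(2) by (metis (no_types))
qed (rule that(1))
lemma col_casesB: obtains "col_of b m s = 0" | i where "1 \<le> i" "i \<le> m" "s = b i"
proof (cases "col_of b m s = 0")
  case False
  from colB_nz[OF False] show ?thesis using that(2) by (metis (no_types))
qed (rule that(1))

lemmas wsimps = evl_map distinct_upt distinct_filter set_filter kd_def fin_nbrsA fin_nbrsB mem_nbrsA mem_nbrsB

end

context cg begin

lemma colA_eq'[simp]: "1 \<le> i \<Longrightarrow> i \<le> m \<Longrightarrow> i = col_of a m x \<longleftrightarrow> a i = x"
  using colA_eq by metis
lemma colB_eq'[simp]: "1 \<le> i \<Longrightarrow> i \<le> m \<Longrightarrow> i = col_of b m x \<longleftrightarrow> b i = x"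
  using colB_eq by metis

lemma sum_of_bool_conj[simp]: "(\<Sum>t\<in>A. (of_bool (P \<and> Q t)::int)) = (if P then (\<Sum>t\<in>A. of_bool (Q t)) else 0)"
  by auto

lemma srg_cardA: "s \<in> VA \<Longrightarrow> t0 \<in> VA \<Longrightarrow>
  card (nbrs VA EA s \<inter> Collect (EA t0)) = (if s = t0 then d else if EA t0 s then l else mu)"
  using srg_countA[of s t0] EA_irr by (auto simp: sum_of_bool_eq fin_nbrsA)
lemma srg_cardB: "s \<in> VB \<Longrightarrow> t0 \<in> VB \<Longrightarrow>
  card (nbrs VB EB s \<inter> Collect (EB t0)) = (if s = t0 then d else if EB t0 s then l else mu)"
  using srg_countB[of s t0] EB_irr by (auto simp: sum_of_bool_eq fin_nbrsB)

lemmas Msimps = srg_cardA srg_cardB EA_irr EB_irr wsimps EA_sym EB_sym srg_countA srg_countB degA degB a_inV b_inV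

lemma Mbas: assumes x: "x \<in> V" and y: "y \<in> V"
  shows "(\<Sum>z\<in>nbrs V E x. bas y \<beta> z) = evl (bas y) (T (kd y) \<beta>) x"
proof (cases x)
  case (LV s)
  hence s: "s \<in> VA" using x by simp
  show ?thesis
  proof (cases rule: col_casesA[of s])
    case 1 thus ?thesis using LV s y
      by (cases \<beta>; cases y) (auto simp: sum_LV Msimps simp del: upt_Suc)
  next
    case (2 i) thus ?thesis using LV s y
      by (cases \<beta>; cases y) (auto simp: sum_LV Msimps simp del: upt_Suc)
  qed
next
  case (RV s)
  hence s: "s \<in> VB" using x by simp
  show ?thesis
  proof (cases rule: col_casesB[of s])
    case 1 thus ?thesis using RV s y
      by (cases \<beta>; cases y) (auto simp: sum_RV Msimps simp del: upt_Suc)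
  next
    case (2 i) thus ?thesis using RV s y
      by (cases \<beta>; cases y) (auto simp: sum_RV Msimps simp del: upt_Suc)
  qed
next
  case (CV k)
  hence k: "1 \<le> k" "k \<le> m" using x by simp_all
  thus ?thesis using CV y
      by (cases \<beta>; cases y) (auto simp: sum_CV Msimps simp del: upt_Suc)
next
  case (PV k j)
  hence k: "1 \<le> k" "k \<le> m" "1 \<le> j" "j \<le> k" using x by simp_all
  thus ?thesis using PV y
      by (cases \<beta>; cases y) (auto simp: sum_PV Msimps simp del: upt_Suc)
qed



lemma M_evl: assumes x: "x \<in> V" and y: "y \<in> V"
  shows "(\<Sum>z\<in>nbrs V E x. evl (bas y) xs z) = evl (bas y) (stp d l mu m DAa DBb (kd y) xs) x"
proof (induction xs)
  case Nil
  then show ?case by (simp add: stp_def)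
next
  case (Cons p xs)
  obtain c \<beta> where p: "p = (c, \<beta>)" by (cases p)
  have "(\<Sum>z\<in>nbrs V E x. evl (bas y) (p # xs) z) =
        c * (\<Sum>z\<in>nbrs V E x. bas y \<beta> z) + (\<Sum>z\<in>nbrs V E x. evl (bas y) xs z)"
    by (simp add: p sum.distrib sum_distrib_left)
  also have "\<dots> = c * evl (bas y) (T (kd y) \<beta>) x + evl (bas y) (stp d l mu m DAa DBb (kd y) xs) x"
    using Mbas[OF x y] Cons by simp
  also have "\<dots> = evl (bas y) (stp d l mu m DAa DBb (kd y) (p # xs)) x"
    by (simp add: p stp_def evl_scale)
  finally show ?case .
qed

lemma nbrs_sub: "nbrs V E x \<subseteq> V" by (auto simp: nbrs_def)

lemma walks_evl: assumes "x \<in> V" "y \<in> V"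
  shows "int (walks V E k x y) = evl (bas y) (coefs d l mu m DAa DBb (kd y) k) x"
  using assms(1)
proof (induction k arbitrary: x)
  case 0
  then show ?case by simp
next
  case (Suc k)
  have "int (walks V E (Suc k) x y) = (\<Sum>z\<in>nbrs V E x. int (walks V E k z y))" by simp
  also have "\<dots> = (\<Sum>z\<in>nbrs V E x. evl (bas y) (coefs d l mu m DAa DBb (kd y) k) z)"
    apply (rule sum.cong[OF refl])
    using Suc.IH nbrs_sub by blast
  also have "\<dots> = evl (bas y) (coefs d l mu m DAa DBb (kd y) (Suc k)) x"
    using M_evl[OF Suc.prems assms(2)] by simp
  finally show ?case .
qed

end

lemma cr_Suc_eq: "cr V E c (Suc k) x = cr V' E' c' (Suc k) x' \<longleftrightarrow>
   cr V E c k x = cr V' E' c' k x' \<and>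
   image_mset (cr V E c k) (mset_set (nbrs V E x)) = image_mset (cr V' E' c' k) (mset_set (nbrs V' E' x'))"
  by simp

lemma cr_down: "cr V E c k x = cr V' E' c' k x' \<Longrightarrow> j \<le> k \<Longrightarrow> cr V E c j x = cr V' E' c' j x'"
proof (induction k)
  case 0 thus ?case by simp
next
  case (Suc k)
  thus ?case by (cases "j = Suc k") (auto simp del: cr.simps simp: cr_Suc_eq)
qed

fun fstw :: "wlc \<Rightarrow> wlc" where
  "fstw (WLStep p _) = p" | "fstw (WLInit c) = WLInit c"

lemma fstw_cr: "(fstw ^^ i) (cr V E c (j + i) x) = cr V E c j x"
proof (induction i)
  case 0 thus ?case by simp
next
  case (Suc i)
  have "(fstw ^^ Suc i) (cr V E c (j + Suc i) x) = (fstw ^^ i) (fstw (cr V E c (Suc (j + i)) x))"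
    by (simp add: funpow_Suc_right del: funpow.simps cr.simps)
  also have "\<dots> = (fstw ^^ i) (cr V E c (j + i) x)" by simp
  finally show ?case using Suc by simp
qed

lemma cr_mset_down: assumes "image_mset (cr V E c k) (mset_set V) = image_mset (cr V' E' c' k) (mset_set V')"
  and "j \<le> k"
  shows "image_mset (cr V E c j) (mset_set V) = image_mset (cr V' E' c' j) (mset_set V')"
proof -
  obtain i where k: "k = j + i" using assms(2) le_Suc_ex by blast
  have "image_mset (cr V E c j) (mset_set V) = image_mset (fstw ^^ i) (image_mset (cr V E c k) (mset_set V))"
    by (simp add: k fstw_cr comp_def image_mset.compositionality del: cr.simps)
  also have "\<dots> = image_mset (fstw ^^ i) (image_mset (cr V' E' c' k) (mset_set V'))" using assms(1) by simp
  also have "\<dots> = image_mset (cr V' E' c' j) (mset_set V')"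
    by (simp add: k fstw_cr comp_def image_mset.compositionality del: cr.simps)
  finally show ?thesis .
qed

lemma mset_transfer:
  assumes fin: "finite S1" "finite S2"
    and eq: "image_mset f (mset_set S1) = image_mset g (mset_set S2)"
    and det: "\<And>u v. u \<in> S1 \<Longrightarrow> v \<in> S2 \<Longrightarrow> f u = g v \<Longrightarrow> h u = h' v"
  shows "image_mset h (mset_set S1) = image_mset h' (mset_set S2)"
proof -
  have seteq: "f ` S1 = g ` S2"
  proof -
    have "set_mset (image_mset f (mset_set S1)) = set_mset (image_mset g (mset_set S2))" using eq by simp
    thus ?thesis using fin by simp
  qed
  define H where "H c = (if c \<in> f ` S1 then h (SOME u. u \<in> S1 \<and> f u = c) else h' (SOME v. v \<in> S2 \<and> g v = c))" for c
  have 1: "h u = H (f u)" if u: "u \<in> S1" for u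
  proof -
    have "f u \<in> f ` S1" using u by simp
    hence "f u \<in> g ` S2" by (simp only: seteq)
    then obtain v where v0: "f u = g v" "v \<in> S2" by (rule imageE)
    hence v: "v \<in> S2" "g v = f u" by simp_all
    have ex: "\<exists>u'. u' \<in> S1 \<and> f u' = f u" using u by blast
    define u' where "u' = (SOME u'. u' \<in> S1 \<and> f u' = f u)"
    have u': "u' \<in> S1" "f u' = f u" using someI_ex[OF ex] unfolding u'_def by blast+
    have "H (f u) = h u'" using u by (simp add: H_def u'_def)
    also have "\<dots> = h' v" using det[OF u'(1) v(1)] u' v by simp
    also have "\<dots> = h u" using det[OF u v(1)] v by simp
    finally show ?thesis by simp
  qed
  have 2: "h' v = H (g v)" if v: "v \<in> S2" for v
  proof -
    have "g v \<in> g ` S2" using v by simp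
    hence "g v \<in> f ` S1" by (simp only: seteq)
    then obtain u where u0: "g v = f u" "u \<in> S1" by (rule imageE)
    hence u: "u \<in> S1" "f u = g v" by simp_all
    have ex: "\<exists>u'. u' \<in> S1 \<and> f u' = g v" using u by blast
    define u' where "u' = (SOME u'. u' \<in> S1 \<and> f u' = g v)"
    have u': "u' \<in> S1" "f u' = g v" using someI_ex[OF ex] unfolding u'_def by blast+
    have "H (g v) = h u'" using \<open>g v \<in> f ` S1\<close> by (simp add: H_def u'_def)
    also have "\<dots> = h' v" using det[OF u'(1) v] u' by simp
    finally show ?thesis by simp
  qed
  have "image_mset h (mset_set S1) = image_mset (H \<circ> f) (mset_set S1)"
    by (rule image_mset_cong) (simp add: 1 fin(1))
  also have "\<dots> = image_mset H (image_mset f (mset_set S1))" by (simp add: image_mset.compositionality)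
  also have "\<dots> = image_mset H (image_mset g (mset_set S2))" using eq by simp
  also have "\<dots> = image_mset (H \<circ> g) (mset_set S2)" by (simp add: image_mset.compositionality)
  also have "\<dots> = image_mset h' (mset_set S2)"
    by (rule image_mset_cong) (simp add: 2 fin(2))
  finally show ?thesis .
qed

lemma mset_split3: assumes "finite V" "x0 \<in> V" "N \<subseteq> V" "x0 \<notin> N"
  shows "mset_set V = add_mset x0 (mset_set N + mset_set (V - insert x0 N))"
proof -
  have "V = insert x0 (N \<union> (V - insert x0 N))" using assms by auto
  hence "mset_set V = mset_set (insert x0 (N \<union> (V - insert x0 N)))" by simp
  also have "\<dots> = add_mset x0 (mset_set (N \<union> (V - insert x0 N)))"
    using assms by (subst mset_set.insert) (auto intro: finite_subset)
  also have "mset_set (N \<union> (V - insert x0 N)) = mset_set N + mset_set (V - insert x0 N)"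
    using assms by (subst mset_set_Union) (auto intro: finite_subset)
  finally show ?thesis .
qed

lemma local_mset:
  assumes fin1: "finite V1" and fin2: "finite V2"
    and x0: "x0 \<in> V1" and x0': "x0' \<in> V2"
    and irr1: "\<not> E1 x0 x0" and irr2: "\<not> E2 x0' x0'"
    and hc: "cr V1 E1 c1 (Suc (Suc s)) x0 = cr V2 E2 c2 (Suc (Suc s)) x0'"
    and htot: "image_mset (cr V1 E1 c1 (Suc s)) (mset_set V1) = image_mset (cr V2 E2 c2 (Suc s)) (mset_set V2)"
  shows "image_mset (\<lambda>x. (x = x0, E1 x0 x, cr V1 E1 c1 (Suc s) x)) (mset_set V1)
       = image_mset (\<lambda>x. (x = x0', E2 x0' x, cr V2 E2 c2 (Suc s) x)) (mset_set V2)"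
proof -
  define C1 where "C1 = cr V1 E1 c1 (Suc s)"
  define C2 where "C2 = cr V2 E2 c2 (Suc s)"
  define N1 where "N1 = nbrs V1 E1 x0"
  define N2 where "N2 = nbrs V2 E2 x0'"
  define R1 where "R1 = V1 - insert x0 N1"
  define R2 where "R2 = V2 - insert x0' N2"
  have hc': "C1 x0 = C2 x0'" "image_mset C1 (mset_set N1) = image_mset C2 (mset_set N2)"
    using hc unfolding C1_def C2_def N1_def N2_def by (simp_all del: cr.simps add: cr_Suc_eq)
  have N1: "N1 \<subseteq> V1" "x0 \<notin> N1" using irr1 by (auto simp: N1_def nbrs_def)
  have N2: "N2 \<subseteq> V2" "x0' \<notin> N2" using irr2 by (auto simp: N2_def nbrs_def)
  have sp1: "mset_set V1 = add_mset x0 (mset_set N1 + mset_set R1)"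
    unfolding R1_def by (rule mset_split3[OF fin1 x0 N1])
  have sp2: "mset_set V2 = add_mset x0' (mset_set N2 + mset_set R2)"
    unfolding R2_def by (rule mset_split3[OF fin2 x0' N2])
  have R: "image_mset C1 (mset_set R1) = image_mset C2 (mset_set R2)"
  proof -
    have "image_mset C1 (mset_set V1) = add_mset (C1 x0) (image_mset C1 (mset_set N1) + image_mset C1 (mset_set R1))"
      by (simp add: sp1)
    moreover have "image_mset C2 (mset_set V2) = add_mset (C2 x0') (image_mset C2 (mset_set N2) + image_mset C2 (mset_set R2))"
      by (simp add: sp2)
    ultimately show ?thesis using htot hc' unfolding C1_def C2_def by simp
  qed
  have fN1: "finite N1" "finite R1" using fin1 N1 by (auto simp: R1_def intro: finite_subset)
  have fN2: "finite N2" "finite R2" using fin2 N2 by (auto simp: R2_def intro: finite_subset)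
  have L: "image_mset (\<lambda>x. (x = x0, E1 x0 x, C1 x)) (mset_set V1) =
      add_mset (True, False, C1 x0) (image_mset (\<lambda>v. (False, True, v)) (image_mset C1 (mset_set N1))
        + image_mset (\<lambda>v. (False, False, v)) (image_mset C1 (mset_set R1)))"
  proof -
    have a: "image_mset (\<lambda>x. (x = x0, E1 x0 x, C1 x)) (mset_set N1) = image_mset (\<lambda>v. (False, True, v)) (image_mset C1 (mset_set N1))"
      unfolding image_mset.compositionality
      by (rule image_mset_cong) (use fN1 N1 in \<open>auto simp: N1_def nbrs_def\<close>)
    have b: "image_mset (\<lambda>x. (x = x0, E1 x0 x, C1 x)) (mset_set R1) = image_mset (\<lambda>v. (False, False, v)) (image_mset C1 (mset_set R1))"
      unfolding image_mset.compositionality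
      by (rule image_mset_cong) (use fN1 N1 in \<open>auto simp: R1_def N1_def nbrs_def\<close>)
    show ?thesis using a b irr1 by (simp add: sp1)
  qed
  have L2: "image_mset (\<lambda>x. (x = x0', E2 x0' x, C2 x)) (mset_set V2) =
      add_mset (True, False, C2 x0') (image_mset (\<lambda>v. (False, True, v)) (image_mset C2 (mset_set N2))
        + image_mset (\<lambda>v. (False, False, v)) (image_mset C2 (mset_set R2)))"
  proof -
    have a: "image_mset (\<lambda>x. (x = x0', E2 x0' x, C2 x)) (mset_set N2) = image_mset (\<lambda>v. (False, True, v)) (image_mset C2 (mset_set N2))"
      unfolding image_mset.compositionality
      by (rule image_mset_cong) (use fN2 N2 in \<open>auto simp: N2_def nbrs_def\<close>)
    have b: "image_mset (\<lambda>x. (x = x0', E2 x0' x, C2 x)) (mset_set R2) = image_mset (\<lambda>v. (False, False, v)) (image_mset C2 (mset_set R2))"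
      unfolding image_mset.compositionality
      by (rule image_mset_cong) (use fN2 N2 in \<open>auto simp: R2_def N2_def nbrs_def\<close>)
    show ?thesis using a b irr2 by (simp add: sp2)
  qed
  show ?thesis using L L2 hc' R unfolding C1_def C2_def by simp
qed

definition colw :: "wlc \<Rightarrow> nat" where
  "colw \<gamma> = (case \<gamma> of WLStep (WLInit c) _ \<Rightarrow> c | _ \<Rightarrow> 0)"
definition nbset :: "wlc \<Rightarrow> nat set" where
  "nbset \<gamma> = (case \<gamma> of WLStep _ M \<Rightarrow> {i. i \<noteq> 0 \<and> WLInit i \<in># M} | _ \<Rightarrow> {})"

fun cpv :: "nat \<times> nat \<Rightarrow> ('a,'b) cv" where
  "cpv (i, j) = (if j = 0 then CV i else PV i j)"

definition CPI :: "nat \<Rightarrow> (nat \<times> nat) set" where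
  "CPI m = {(i, 0) | i. 1 \<le> i \<and> i \<le> m} \<union> {(i, j) | i j. 1 \<le> i \<and> i \<le> m \<and> 1 \<le> j \<and> j \<le> i}"

lemma finite_CPI: "finite (CPI m)"
proof -
  have "CPI m \<subseteq> {0..m} \<times> {0..m}" by (auto simp: CPI_def)
  thus ?thesis using finite_subset by blast
qed

lemma inj_cpv: "inj_on cpv (CPI m)"
  by (auto simp: inj_on_def CPI_def)

lemma constr_V_split: "constr_V VA VB m = LV ` VA \<union> RV ` VB \<union> cpv ` CPI m"
proof -
  have p1: "{PV i j | i j. 1 \<le> i \<and> i \<le> m \<and> 1 \<le> j \<and> j \<le> i} = cpv ` {(i, j) | i j. 1 \<le> i \<and> i \<le> m \<and> 1 \<le> j \<and> j \<le> i}"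
  proof (rule set_eqI, rule iffI)
    fix x assume "x \<in> {PV i j | i j. 1 \<le> i \<and> i \<le> m \<and> 1 \<le> j \<and> j \<le> i}"
    then obtain i j where ij: "x = PV i j" "1 \<le> i" "i \<le> m" "1 \<le> j" "j \<le> i" by blast
    hence "(i, j) \<in> {(i, j) | i j. 1 \<le> i \<and> i \<le> m \<and> 1 \<le> j \<and> j \<le> i}" by blast
    moreover have "x = cpv (i, j)" using ij by simp
    ultimately show "x \<in> cpv ` {(i, j) | i j. 1 \<le> i \<and> i \<le> m \<and> 1 \<le> j \<and> j \<le> i}" by (rule rev_image_eqI)
  next
    fix x assume "x \<in> cpv ` {(i, j) | i j. 1 \<le> i \<and> i \<le> m \<and> 1 \<le> j \<and> j \<le> i}"
    thus "x \<in> {PV i j | i j. 1 \<le> i \<and> i \<le> m \<and> 1 \<le> j \<and> j \<le> i}" by auto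
  qed
  have p2: "CV ` {1..m} = cpv ` {(i, 0) | i. 1 \<le> i \<and> i \<le> m}"
  proof -
    have e1: "{(i, 0) | i. 1 \<le> i \<and> i \<le> m} = (\<lambda>i. (i, 0)) ` {1..m}" by auto
    have e2: "cpv ` ((\<lambda>i. (i, 0)) ` {1..m}) = CV ` {1..m}" by (simp add: image_image)
    show ?thesis by (simp only: e1 e2)
  qed
  show ?thesis unfolding constr_V_def CPI_def image_Un p1 p2 by (simp only: Un_assoc)
qed

lemma mset_constr_V: assumes "finite VA" "finite VB"
  shows "image_mset f (mset_set (constr_V VA VB m)) =
    image_mset (f \<circ> LV) (mset_set VA) + image_mset (f \<circ> RV) (mset_set VB) + image_mset (f \<circ> cpv) (mset_set (CPI m))"
proof -
  have "mset_set (constr_V VA VB m) = mset_set (LV ` VA) + mset_set (RV ` VB) + mset_set (cpv ` CPI m)"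
    unfolding constr_V_split using assms finite_CPI
    apply (subst mset_set_Union, simp_all)
     apply (auto simp: CPI_def)[1]
    apply (subst mset_set_Union, auto)
    done
  also have "\<dots> = image_mset LV (mset_set VA) + image_mset RV (mset_set VB) + image_mset cpv (mset_set (CPI m))"
    by (simp add: image_mset_mset_set[OF inj_cpv] image_mset_mset_set inj_on_def)
  finally show ?thesis by (simp add: image_mset.compositionality)
qed

context cg begin

lemma cr1A: "s \<in> VA \<Longrightarrow> colw (cr VA EA (col_of a m) 1 s) = col_of a m s"
  by (simp add: colw_def)
lemma cr1B: "s \<in> VB \<Longrightarrow> colw (cr VB EB (col_of b m) 1 s) = col_of b m s"
  by (simp add: colw_def)

lemma nb1A: assumes "s \<in> VA" shows "nbset (cr VA EA (col_of a m) 1 s) = {i\<in>{1..m}. EA (a i) s}"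
proof -
  have "nbset (cr VA EA (col_of a m) 1 s) = {i. i \<noteq> 0 \<and> (\<exists>z\<in>nbrs VA EA s. col_of a m z = i)}"
    using fin_nbrsA by (auto simp: nbset_def)
  also have "\<dots> = {i\<in>{1..m}. EA (a i) s}"
  proof (rule set_eqI, rule iffI)
    fix i assume "i \<in> {i. i \<noteq> 0 \<and> (\<exists>z\<in>nbrs VA EA s. col_of a m z = i)}"
    then obtain z where z: "i \<noteq> 0" "z \<in> nbrs VA EA s" "col_of a m z = i" by blast
    from z(1,3) have "col_of a m z \<noteq> 0" by simp
    from colA_nz[OF this] have "1 \<le> i \<and> i \<le> m \<and> a i = z" by (simp only: z(3))
    hence "1 \<le> i" "i \<le> m" "a i = z" by simp_all
    moreover have "EA s (a i)" using z(2) \<open>a i = z\<close> mem_nbrsA by simp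
    hence "EA (a i) s" by (rule EA_sym)
    ultimately show "i \<in> {i\<in>{1..m}. EA (a i) s}" by simp
  next
    fix i assume "i \<in> {i\<in>{1..m}. EA (a i) s}"
    hence i: "1 \<le> i" "i \<le> m" "EA (a i) s" by auto
    hence "a i \<in> nbrs VA EA s" using mem_nbrsA EA_sym by metis
    moreover have "col_of a m (a i) = i" using i by simp
    ultimately show "i \<in> {i. i \<noteq> 0 \<and> (\<exists>z\<in>nbrs VA EA s. col_of a m z = i)}" using i by force
  qed
  finally show ?thesis .
qed

lemma nb1B: assumes "s \<in> VB" shows "nbset (cr VB EB (col_of b m) 1 s) = {i\<in>{1..m}. EB (b i) s}"
proof -
  have "nbset (cr VB EB (col_of b m) 1 s) = {i. i \<noteq> 0 \<and> (\<exists>z\<in>nbrs VB EB s. col_of b m z = i)}"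
    using fin_nbrsB by (auto simp: nbset_def)
  also have "\<dots> = {i\<in>{1..m}. EB (b i) s}"
  proof (rule set_eqI, rule iffI)
    fix i assume "i \<in> {i. i \<noteq> 0 \<and> (\<exists>z\<in>nbrs VB EB s. col_of b m z = i)}"
    then obtain z where z: "i \<noteq> 0" "z \<in> nbrs VB EB s" "col_of b m z = i" by blast
    from z(1,3) have "col_of b m z \<noteq> 0" by simp
    from colB_nz[OF this] have "1 \<le> i \<and> i \<le> m \<and> b i = z" by (simp only: z(3))
    hence "1 \<le> i" "i \<le> m" "b i = z" by simp_all
    moreover have "EB s (b i)" using z(2) \<open>b i = z\<close> mem_nbrsB by simp
    hence "EB (b i) s" by (rule EB_sym)
    ultimately show "i \<in> {i\<in>{1..m}. EB (b i) s}" by simp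
  next
    fix i assume "i \<in> {i\<in>{1..m}. EB (b i) s}"
    hence i: "1 \<le> i" "i \<le> m" "EB (b i) s" by auto
    hence "b i \<in> nbrs VB EB s" using mem_nbrsB EB_sym by metis
    moreover have "col_of b m (b i) = i" using i by simp
    ultimately show "i \<in> {i. i \<noteq> 0 \<and> (\<exists>z\<in>nbrs VB EB s. col_of b m z = i)}" using i by force
  qed
  finally show ?thesis .
qed

lemma kd_LV: "s \<in> VA \<Longrightarrow> kd (LV s) = KL (colw (cr VA EA (col_of a m) 1 s)) (nbset (cr VA EA (col_of a m) 1 s))"
  by (simp only: cr1A nb1A) (simp add: kd_def)
lemma kd_RV: "s \<in> VB \<Longrightarrow> kd (RV s) = KR (colw (cr VB EB (col_of b m) 1 s)) (nbset (cr VB EB (col_of b m) 1 s))"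
  by (simp only: cr1B nb1B) (simp add: kd_def)

definition key :: "nat \<Rightarrow> ('a,'b) cv \<Rightarrow> (nat \<times> wlc) + (nat \<times> nat)" where
  "key s u = (case u of LV x \<Rightarrow> Inl (0, cr VA EA (col_of a m) (Suc s) x)
     | RV y \<Rightarrow> Inl (1, cr VB EB (col_of b m) (Suc s) y) | CV i \<Rightarrow> Inr (i, 0) | PV i j \<Rightarrow> Inr (i, j))"

lemma key_cpv: "p \<in> CPI m \<Longrightarrow> key s (cpv p) = Inr p"
  by (auto simp: CPI_def key_def)

lemma cpv_eq_key: "p \<in> CPI m \<Longrightarrow> u \<in> V \<Longrightarrow> cpv p = u \<longleftrightarrow> key s u = Inr p"
  by (cases u) (auto simp: CPI_def key_def)

lemma sadj_irr: "\<not> sadj u u" by (cases u) (auto simp: EA_irr EB_irr)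
lemma sadj_sym: "sadj u v = sadj v u"
  by (cases u; cases v) (auto intro: EA_sym EB_sym)

end

lemma evl_cong: "(\<And>\<beta>. f \<beta> x = g \<beta> x') \<Longrightarrow> evl f xs x = evl g xs x'"
  by (induction xs) (auto simp: evl_def)

locale cg2 = G: cg VA EA VB EB a b m n d l mu + H: cg VA EA VA EA a a m n d l mu
  for VA :: "'a set" and EA and VB :: "'b set" and EB and a b m n d l mu
begin

lemma bas_cmp:
  assumes k: "G.kd x = H.kd x'" and e: "(x = y) = (x' = y')" and s: "G.sadj y x = H.sadj y' x'"
  shows "G.bas y \<beta> x = H.bas y' \<beta> x'"
proof (cases x)
  case (LV s0)
  then obtain s0' where x': "x' = LV s0'" using k by (cases x') (auto simp: G.kd_def H.kd_def)
  have c: "col_of a m s0 = col_of a m s0'" and S: "\<And>i. 1 \<le> i \<Longrightarrow> i \<le> m \<Longrightarrow> EA (a i) s0 = EA (a i) s0'"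
    using k LV x' by (auto simp: G.kd_def H.kd_def set_eq_iff)
  have ai: "1 \<le> i \<Longrightarrow> i \<le> m \<Longrightarrow> (s0 = a i) = (s0' = a i)" for i
    using c G.colA_eq by metis
  show ?thesis using LV x' e s ai S by (cases \<beta>) auto
next
  case (RV s0)
  then obtain s0' where x': "x' = RV s0'" using k by (cases x') (auto simp: G.kd_def H.kd_def)
  have c: "col_of b m s0 = col_of a m s0'" and S: "\<And>i. 1 \<le> i \<Longrightarrow> i \<le> m \<Longrightarrow> EB (b i) s0 = EA (a i) s0'"
    using k RV x' by (auto simp: G.kd_def H.kd_def set_eq_iff)
  have ai: "1 \<le> i \<Longrightarrow> i \<le> m \<Longrightarrow> (s0 = b i) = (s0' = a i)" for i
    using c G.colA_eq G.colB_eq by metis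
  show ?thesis using RV x' e s ai S by (cases \<beta>) auto
next
  case (CV k0)
  then have x': "x' = CV k0" using k by (cases x') (auto simp: G.kd_def H.kd_def)
  show ?thesis using CV x' e s by (cases \<beta>) auto
next
  case (PV k0 j0)
  then have x': "x' = PV k0 j0" using k by (cases x') (auto simp: G.kd_def H.kd_def)
  show ?thesis using PV x' e s by (cases \<beta>) auto
qed

lemma walks_cmp:
  assumes DB: "G.DBb = H.DBb"
    and x: "x \<in> G.V" and y: "y \<in> G.V" and x': "x' \<in> H.V" and y': "y' \<in> H.V"
    and kx: "G.kd x = H.kd x'" and ky: "G.kd y = H.kd y'"
    and e: "(x = y) = (x' = y')" and s: "G.sadj y x = H.sadj y' x'"
  shows "walks G.V G.E k x y = walks H.V H.E k x' y'"
proof -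
  have "int (walks G.V G.E k x y) = evl (G.bas y) (coefs d l mu m G.DAa G.DBb (G.kd y) k) x"
    by (rule G.walks_evl[OF x y])
  also have "\<dots> = evl (H.bas y') (coefs d l mu m G.DAa G.DBb (G.kd y) k) x'"
    by (rule evl_cong) (rule bas_cmp[OF kx e s])
  also have "\<dots> = evl (H.bas y') (coefs d l mu m H.DAa H.DBb (H.kd y') k) x'"
    using DB ky by simp
  also have "\<dots> = int (walks H.V H.E k x' y')"
    by (rule H.walks_evl[OF x' y', symmetric])
  finally show ?thesis by simp
qed


abbreviation "cA \<equiv> cr VA EA (col_of a m)"
abbreviation "cB \<equiv> cr VB EB (col_of b m)"

lemma key_kd: assumes u: "u \<in> G.V" and u': "u' \<in> H.V" and k: "G.key s u = H.key s u'"
  shows "G.kd u = H.kd u'"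
proof (cases u)
  case (LV x)
  then obtain x' where x': "u' = LV x'" using k by (cases u') (auto simp: G.key_def H.key_def)
  have "cA (Suc s) x = cA (Suc s) x'" using k LV x' by (simp add: G.key_def H.key_def del: cr.simps)
  hence "cA 1 x = cA 1 x'" by (rule cr_down) simp
  thus ?thesis using LV x' u u' G.kd_LV H.kd_LV by simp
next
  case (RV y)
  then obtain x' where x': "u' = RV x'" using k by (cases u') (auto simp: G.key_def H.key_def)
  have "cB (Suc s) y = cA (Suc s) x'" using k RV x' by (simp add: G.key_def H.key_def del: cr.simps)
  hence "cB 1 y = cA 1 x'" by (rule cr_down) simp
  thus ?thesis using RV x' u u' G.kd_RV H.kd_RV by simp
next
  case (CV i)
  then have "u' = CV i" using k u' by (cases u') (auto simp: G.key_def H.key_def)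
  thus ?thesis using CV by (simp add: G.kd_def H.kd_def)
next
  case (PV i j)
  then have "u' = PV i j" using k u by (cases u') (auto simp: G.key_def H.key_def)
  thus ?thesis using PV by (simp add: G.kd_def H.kd_def)
qed

lemma key_down: assumes k: "G.key (Suc s) u = H.key (Suc s) u'" and u: "u \<in> G.V" and u': "u' \<in> H.V" shows "G.key s u = H.key s u'"
proof (cases u)
  case (LV x)
  then obtain x' where x': "u' = LV x'" using k by (cases u') (auto simp: G.key_def H.key_def)
  have "cA (Suc (Suc s)) x = cA (Suc (Suc s)) x'" using k LV x' by (simp add: G.key_def H.key_def del: cr.simps)
  hence "cA (Suc s) x = cA (Suc s) x'" by (rule cr_down) simp
  thus ?thesis using LV x' by (simp add: G.key_def H.key_def del: cr.simps)
next
  case (RV y)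
  then obtain x' where x': "u' = RV x'" using k by (cases u') (auto simp: G.key_def H.key_def)
  have "cB (Suc (Suc s)) y = cA (Suc (Suc s)) x'" using k RV x' by (simp add: G.key_def H.key_def del: cr.simps)
  hence "cB (Suc s) y = cA (Suc s) x'" by (rule cr_down) simp
  thus ?thesis using RV x' by (simp add: G.key_def H.key_def del: cr.simps)
next
  case (CV i)
  then have "u' = CV i" using k u' by (cases u') (auto simp: G.key_def H.key_def)
  thus ?thesis using CV by (simp add: G.key_def H.key_def)
next
  case (PV i j)
  then have "u' = PV i j" using k u by (cases u') (auto simp: G.key_def H.key_def)
  thus ?thesis using PV by (simp add: G.key_def H.key_def)
qed


lemma G_sadj_cpv: "G.sadj u (cpv p) = False"
  by (cases p; cases u) auto
lemma H_sadj_cpv: "H.sadj u (cpv p) = False"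
  by (cases p; cases u) auto

lemma LV_iff: assumes u: "u \<in> G.V" and u': "u' \<in> H.V" and k: "G.key t u = H.key t u'"
  shows "(\<exists>x. u = LV x) \<longleftrightarrow> (\<exists>x. u' = LV x)"
  using k by (cases u; cases u') (auto simp: G.key_def H.key_def)
lemma RV_iff: assumes u: "u \<in> G.V" and u': "u' \<in> H.V" and k: "G.key t u = H.key t u'"
  shows "(\<exists>x. u = RV x) \<longleftrightarrow> (\<exists>x. u' = RV x)"
  using k by (cases u; cases u') (auto simp: G.key_def H.key_def)

lemma jkey_mset:
  assumes hr: "image_mset (cB r) (mset_set VB) = image_mset (cA r) (mset_set VA)" and sr: "Suc s < r"
    and u: "u \<in> G.V" and u': "u' \<in> H.V" and k: "G.key (Suc s) u = H.key (Suc s) u'"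
  shows "image_mset (\<lambda>y. (y = u, G.sadj u y, G.key s y)) (mset_set G.V)
       = image_mset (\<lambda>y. (y = u', H.sadj u' y, H.key s y)) (mset_set H.V)"
proof -
  define F where "F = (\<lambda>y. (y = u, G.sadj u y, G.key s y))"
  define F' where "F' = (\<lambda>y. (y = u', H.sadj u' y, H.key s y))"
  have hs: "image_mset (cB (Suc s)) (mset_set VB) = image_mset (cA (Suc s)) (mset_set VA)"
    by (rule cr_mset_down[OF hr]) (use sr in simp)
  have CP: "image_mset (F \<circ> cpv) (mset_set (CPI m)) = image_mset (F' \<circ> cpv) (mset_set (CPI m))"
  proof (rule image_mset_cong)
    fix p assume "p \<in># mset_set (CPI m)"
    hence p: "p \<in> CPI m" using finite_CPI by simp
    have "(F \<circ> cpv) p = (G.key (Suc s) u = Inr p, False, Inr p)"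
      unfolding F_def comp_def using G.cpv_eq_key[OF p u] G.key_cpv[OF p] G_sadj_cpv by simp
    moreover have "(F' \<circ> cpv) p = (H.key (Suc s) u' = Inr p, False, Inr p)"
      unfolding F'_def comp_def using H.cpv_eq_key[OF p u'] H.key_cpv[OF p] H_sadj_cpv by simp
    ultimately show "(F \<circ> cpv) p = (F' \<circ> cpv) p" using k by simp
  qed
  have LVp: "image_mset (F \<circ> LV) (mset_set VA) = image_mset (F' \<circ> LV) (mset_set VA)"
  proof (cases "\<exists>x. u = LV x")
    case True
    then obtain x0 where x0: "u = LV x0" by blast
    then obtain x0' where x0': "u' = LV x0'" using LV_iff[OF u u' k] by blast
    have hx: "x0 \<in> VA" "x0' \<in> VA" using u u' x0 x0' by simp_all
    have hc: "cA (Suc (Suc s)) x0 = cA (Suc (Suc s)) x0'"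
      using k x0 x0' by (simp add: G.key_def H.key_def del: cr.simps)
    have "image_mset (F \<circ> LV) (mset_set VA) = image_mset (\<lambda>(p, q, c). (p, q, Inl (0, c)))
       (image_mset (\<lambda>x. (x = x0, EA x0 x, cA (Suc s) x)) (mset_set VA))"
      by (simp add: F_def x0 G.key_def image_mset.compositionality comp_def del: cr.simps)
    also have "\<dots> = image_mset (\<lambda>(p, q, c). (p, q, Inl (0, c)))
       (image_mset (\<lambda>x. (x = x0', EA x0' x, cA (Suc s) x)) (mset_set VA))"
      using local_mset[OF G.finA G.finA hx G.EA_irr G.EA_irr hc refl] by simp
    also have "\<dots> = image_mset (F' \<circ> LV) (mset_set VA)"
      by (simp add: F'_def x0' H.key_def image_mset.compositionality comp_def del: cr.simps)
    finally show ?thesis .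
  next
    case False
    hence F2: "\<not> (\<exists>x. u' = LV x)" using LV_iff[OF u u' k] by blast
    have "F (LV x) = (False, False, Inl (0, cA (Suc s) x))" for x
      using False by (cases u) (auto simp: F_def G.key_def)
    moreover have "F' (LV x) = (False, False, Inl (0, cA (Suc s) x))" for x
      using F2 by (cases u') (auto simp: F'_def H.key_def)
    ultimately show ?thesis by (simp add: comp_def)
  qed
  have RVp: "image_mset (F \<circ> RV) (mset_set VB) = image_mset (F' \<circ> RV) (mset_set VA)"
  proof (cases "\<exists>x. u = RV x")
    case True
    then obtain y0 where y0: "u = RV y0" by blast
    then obtain x0' where x0': "u' = RV x0'" using RV_iff[OF u u' k] by blast
    have hx: "y0 \<in> VB" "x0' \<in> VA" using u u' y0 x0' by simp_all
    have hc: "cB (Suc (Suc s)) y0 = cA (Suc (Suc s)) x0'"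
      using k y0 x0' by (simp add: G.key_def H.key_def del: cr.simps)
    have "image_mset (F \<circ> RV) (mset_set VB) = image_mset (\<lambda>(p, q, c). (p, q, Inl (1, c)))
       (image_mset (\<lambda>x. (x = y0, EB y0 x, cB (Suc s) x)) (mset_set VB))"
      by (simp add: F_def y0 G.key_def image_mset.compositionality comp_def del: cr.simps)
    also have "\<dots> = image_mset (\<lambda>(p, q, c). (p, q, Inl (1, c)))
       (image_mset (\<lambda>x. (x = x0', EA x0' x, cA (Suc s) x)) (mset_set VA))"
      using local_mset[OF G.finB G.finA hx G.EB_irr G.EA_irr hc hs] by simp
    also have "\<dots> = image_mset (F' \<circ> RV) (mset_set VA)"
      by (simp add: F'_def x0' H.key_def image_mset.compositionality comp_def del: cr.simps)
    finally show ?thesis .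
  next
    case False
    hence F2: "\<not> (\<exists>x. u' = RV x)" using RV_iff[OF u u' k] by blast
    have "F (RV x) = (False, False, Inl (1, cB (Suc s) x))" for x
      using False by (cases u) (auto simp: F_def G.key_def)
    moreover have "F' (RV x) = (False, False, Inl (1, cA (Suc s) x))" for x
      using F2 by (cases u') (auto simp: F'_def H.key_def)
    ultimately have "image_mset (F \<circ> RV) (mset_set VB) = image_mset (\<lambda>c. (False, False, Inl (1, c))) (image_mset (cB (Suc s)) (mset_set VB))"
      "image_mset (F' \<circ> RV) (mset_set VA) = image_mset (\<lambda>c. (False, False, Inl (1, c))) (image_mset (cA (Suc s)) (mset_set VA))"
      by (simp_all add: comp_def image_mset.compositionality del: cr.simps)
    thus ?thesis using hs by simp
  qed
  have "image_mset F (mset_set G.V) = image_mset F' (mset_set H.V)"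
    using mset_constr_V[OF G.finA G.finB, of F m] mset_constr_V[OF G.finA G.finA, of F' m] CP LVp RVp
    by simp
  thus ?thesis unfolding F_def F'_def .
qed


lemma omega_cmp:
  assumes DB: "G.DBb = H.DBb" and cardV: "card G.V = card H.V"
    and hr: "image_mset (cB r) (mset_set VB) = image_mset (cA r) (mset_set VA)"
  shows "s < r \<Longrightarrow> u \<in> G.V \<Longrightarrow> u' \<in> H.V \<Longrightarrow> G.key s u = H.key s u'
     \<Longrightarrow> omega G.V G.E s u = omega H.V H.E s u'"
proof (induction s arbitrary: u u')
  case 0
  have kd: "G.kd u = H.kd u'" by (rule key_kd[OF 0(2,3,4)])
  have "wstar G.V G.E u u = wstar H.V H.E u' u'"
    unfolding wstar_def cardV
    by (rule map_cong[OF refl], rule walks_cmp[OF DB 0(2) 0(2) 0(3) 0(3) kd kd])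
       (simp_all add: G.sadj_irr H.sadj_irr)
  thus ?case by simp
next
  case (Suc s)
  have kd: "G.kd u = H.kd u'" by (rule key_kd[OF Suc(3,4,5)])
  have k0: "G.key s u = H.key s u'" by (rule key_down[OF Suc(5,3,4)])
  have o1: "omega G.V G.E s u = omega H.V H.E s u'"
    using Suc.IH[OF _ Suc(3,4) k0] Suc(2) by simp
  have o2: "image_mset (\<lambda>y. (wstar G.V G.E u y, omega G.V G.E s y)) (mset_set G.V)
      = image_mset (\<lambda>y. (wstar H.V H.E u' y, omega H.V H.E s y)) (mset_set H.V)"
  proof (rule mset_transfer[OF G.finV H.finV jkey_mset[OF hr Suc(2,3,4,5)]])
    fix y y' assume y: "y \<in> G.V" and y': "y' \<in> H.V"
      and eq: "(y = u, G.sadj u y, G.key s y) = (y' = u', H.sadj u' y', H.key s y')"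
    have ky: "G.kd y = H.kd y'" by (rule key_kd[OF y y', of s]) (use eq in simp)
    have e: "(u = y) = (u' = y')" using eq by auto
    have "G.sadj u y = H.sadj u' y'" using eq by simp
    hence sa: "G.sadj y u = H.sadj y' u'" by (simp only: G.sadj_sym[of y u] H.sadj_sym[of y' u'])
    have "wstar G.V G.E u y = wstar H.V H.E u' y'"
      unfolding wstar_def cardV
      by (rule map_cong[OF refl], rule walks_cmp[OF DB Suc(3) y Suc(4) y' kd ky e sa])
    moreover have "omega G.V G.E s y = omega H.V H.E s y'"
      using Suc.IH[OF _ y y'] Suc(2) eq by simp
    ultimately show "(wstar G.V G.E u y, omega G.V G.E s y) = (wstar H.V H.E u' y', omega H.V H.E s y')"
      by simp
  qed
  show ?case using o1 o2 by simp
qed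


lemma DB_eq: assumes hr: "image_mset (cB r) (mset_set VB) = image_mset (cA r) (mset_set VA)" and r: "1 \<le> r"
  shows "G.DBb = H.DBb"
proof -
  have h1: "image_mset (cB 1) (mset_set VB) = image_mset (cA 1) (mset_set VA)"
    by (rule cr_mset_down[OF hr r])
  have bj: "cB 1 (b j) = cA 1 (a j)" if j: "1 \<le> j" "j \<le> m" for j
  proof -
    have "a j \<in> VA" using G.a_inV j .
    hence "cA 1 (a j) \<in># image_mset (cA 1) (mset_set VA)" using G.finA by simp
    hence "cA 1 (a j) \<in># image_mset (cB 1) (mset_set VB)" using h1 by simp
    then obtain y where y: "y \<in> VB" "cB 1 y = cA 1 (a j)" using G.finB by auto
    have "col_of b m y = col_of a m (a j)" using G.cr1B[OF y(1)] G.cr1A[OF \<open>a j \<in> VA\<close>] y(2) by metis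
    hence "col_of b m y = j" using j by simp
    hence "b j = y" using j by simp
    thus ?thesis using y by simp
  qed
  show ?thesis
  proof (intro ext)
    fix i j
    show "G.DBb i j = H.DBb i j"
    proof (cases "1 \<le> i \<and> i \<le> m \<and> 1 \<le> j \<and> j \<le> m")
      case True
      have "nbset (cB 1 (b j)) = nbset (cA 1 (a j))" using bj True by simp
      hence "{i\<in>{1..m}. EB (b i) (b j)} = {i\<in>{1..m}. EA (a i) (a j)}"
        using G.nb1B[OF G.b_inV] G.nb1A[OF G.a_inV] True by simp
      hence "EB (b i) (b j) = EA (a i) (a j)" using True by (auto simp: set_eq_iff)
      thus ?thesis using True by simp
    next
      case False thus ?thesis by auto
    qed
  qed
qed

lemma part2: assumes hr: "image_mset (cB r) (mset_set VB) = image_mset (cA r) (mset_set VA)" and r: "1 \<le> r"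
  shows "omega_ms G.V G.E (r - 1) = omega_ms H.V H.E (r - 1)"
proof -
  have rr: "Suc (r - 1) = r" "Suc (r - Suc 0) = r" using r by simp_all
  have DB: "G.DBb = H.DBb" by (rule DB_eq[OF hr r])
  have km: "image_mset (G.key (r - 1)) (mset_set G.V) = image_mset (H.key (r - 1)) (mset_set H.V)"
  proof -
    have CP: "image_mset (G.key (r - 1) \<circ> cpv) (mset_set (CPI m)) = image_mset (H.key (r - 1) \<circ> cpv) (mset_set (CPI m))"
      by (rule image_mset_cong) (use finite_CPI G.key_cpv H.key_cpv in simp)
    have L: "image_mset (G.key (r - 1) \<circ> LV) (mset_set VA) = image_mset (H.key (r - 1) \<circ> LV) (mset_set VA)"
      by (simp add: G.key_def H.key_def comp_def)
    have R: "image_mset (G.key (r - 1) \<circ> RV) (mset_set VB) = image_mset (H.key (r - 1) \<circ> RV) (mset_set VA)"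
    proof -
      have "image_mset (G.key (r - 1) \<circ> RV) (mset_set VB) = image_mset (\<lambda>c. Inl (1, c)) (image_mset (cB r) (mset_set VB))"
        by (simp add: G.key_def comp_def image_mset.compositionality rr del: cr.simps)
      also have "\<dots> = image_mset (\<lambda>c. Inl (1, c)) (image_mset (cA r) (mset_set VA))" using hr by simp
      also have "\<dots> = image_mset (H.key (r - 1) \<circ> RV) (mset_set VA)"
        by (simp add: H.key_def comp_def image_mset.compositionality rr del: cr.simps)
      finally show ?thesis .
    qed
    show ?thesis
      using mset_constr_V[OF G.finA G.finB, of "G.key (r - 1)" m] mset_constr_V[OF G.finA G.finA, of "H.key (r - 1)" m] CP L R
      by simp
  qed
  have cardV: "card G.V = card H.V"
  proof -
    have "size (image_mset (G.key (r - 1)) (mset_set G.V)) = size (image_mset (H.key (r - 1)) (mset_set H.V))"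
      using km by simp
    thus ?thesis by simp
  qed
  show ?thesis unfolding omega_ms_def
  proof (rule mset_transfer[OF G.finV H.finV km])
    fix u u' assume "u \<in> G.V" "u' \<in> H.V" "G.key (r - 1) u = H.key (r - 1) u'"
    thus "omega G.V G.E (r - 1) u = omega H.V H.E (r - 1) u'"
      using omega_cmp[OF DB cardV hr] r by simp
  qed
qed

end

fun sndw :: "wlc \<Rightarrow> wlc multiset" where
  "sndw (WLStep _ M) = M" | "sndw (WLInit _) = {#}"

definition dgw :: "wlc \<Rightarrow> nat" where "dgw \<gamma> = size (sndw \<gamma>)"
definition isCw :: "wlc \<Rightarrow> bool" where
  "isCw \<gamma> \<longleftrightarrow> 3 \<le> dgw \<gamma> \<and> 1 \<in># image_mset dgw (sndw \<gamma>)"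
definition isPw :: "wlc \<Rightarrow> bool" where
  "isPw \<gamma> \<longleftrightarrow> dgw \<gamma> = 1 \<and> (\<exists>e\<in>#image_mset dgw (sndw \<gamma>). 3 \<le> e)"
definition colfw :: "wlc \<Rightarrow> nat" where
  "colfw \<gamma> = (if \<exists>\<delta>\<in>#sndw \<gamma>. isCw \<delta> then dgw (SOME \<delta>. \<delta> \<in># sndw \<gamma> \<and> isCw \<delta>) - 2 else 0)"

definition osm :: "wlc option multiset \<Rightarrow> wlc multiset" where
  "osm M = image_mset the (filter_mset (\<lambda>p. p \<noteq> None) M)"

lemma osm_split: "osm (image_mset (\<lambda>x. Some (f x)) N + image_mset (\<lambda>_. None) K) = image_mset f N"
  unfolding osm_def by (simp add: filter_mset_image_mset image_mset.compositionality comp_def)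

context cg begin

abbreviation "cc \<equiv> cr V E (\<lambda>_. 0)"

lemma fin_nbrsV: "finite (nbrs V E u)" using finV finite_subset nbrs_sub by blast

lemma dg_cc: "dgw (cc (Suc j) u) = card (nbrs V E u)"
  by (simp add: dgw_def)

lemma sndw_cc: "sndw (cc (Suc j) u) = image_mset (cc j) (mset_set (nbrs V E u))"
  by simp

lemma deg_LV: "x \<in> VA \<Longrightarrow> card (nbrs V E (LV x)) = d + (if col_of a m x = 0 then 0 else 1)"
  apply (subst nbrs_LV, assumption)
  apply (subst colsetA)
  apply (cases "col_of a m x = 0")
   apply (simp add: card_image inj_on_def degA)
  apply (simp add: card_image inj_on_def degA fin_nbrsA card_insert_if)
  apply blast
  done

lemma deg_RV: "x \<in> VB \<Longrightarrow> card (nbrs V E (RV x)) = d + (if col_of b m x = 0 then 0 else 1)"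
  apply (subst nbrs_RV, assumption)
  apply (subst colsetB)
  apply (cases "col_of b m x = 0")
   apply (simp add: card_image inj_on_def degB)
  apply (simp add: card_image inj_on_def degB fin_nbrsB card_insert_if)
  apply blast
  done

lemma deg_CV: "1 \<le> i \<Longrightarrow> i \<le> m \<Longrightarrow> card (nbrs V E (CV i)) = i + 2"
proof -
  assume i: "1 \<le> i" "i \<le> m"
  have "nbrs V E (CV i) = insert (LV (a i)) (insert (RV (b i)) (PV i ` {1..i}))"
    using nbrs_CV[OF i] by auto
  moreover have "card (PV i ` {1..i}) = i" by (simp add: card_image inj_on_def)
  moreover have "LV (a i) \<notin> insert (RV (b i)) (PV i ` {1..i})" "RV (b i) \<notin> PV i ` {1..i}" by auto
  ultimately show ?thesis by (auto simp: card_insert_if)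
qed

lemma deg_PV: "1 \<le> i \<Longrightarrow> i \<le> m \<Longrightarrow> 1 \<le> j \<Longrightarrow> j \<le> i \<Longrightarrow> card (nbrs V E (PV i j)) = 1"
  by (simp add: nbrs_PV)


abbreviation "dg z \<equiv> card (nbrs V E z)"

lemma img_dg2: "image_mset dgw (sndw (cc (Suc (Suc j)) u)) = image_mset dg (mset_set (nbrs V E u))"
  by (simp only: sndw_cc image_mset.compositionality comp_def dg_cc)

lemma isC_alt: "isCw (cc (Suc (Suc j)) u) \<longleftrightarrow> 3 \<le> dg u \<and> (\<exists>z\<in>nbrs V E u. dg z = 1)"
  unfolding isCw_def img_dg2 using fin_nbrsV[of u] by (auto simp: dg_cc image_iff simp del: cr.simps) (metis)

lemma isP_alt: "isPw (cc (Suc (Suc j)) u) \<longleftrightarrow> dg u = 1 \<and> (\<exists>z\<in>nbrs V E u. 3 \<le> dg z)"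
  unfolding isPw_def img_dg2 using fin_nbrsV[of u] by (auto simp: dg_cc simp del: cr.simps)

lemma nbrs_LV_cases: assumes "x \<in> VA" "z \<in> nbrs V E (LV x)"
  shows "(\<exists>t\<in>VA. z = LV t) \<or> (\<exists>i. 1 \<le> i \<and> i \<le> m \<and> z = CV i)"
  using assms nbrs_LV[OF assms(1)] by (auto simp: nbrs_def)
lemma nbrs_RV_cases: assumes "x \<in> VB" "z \<in> nbrs V E (RV x)"
  shows "(\<exists>t\<in>VB. z = RV t) \<or> (\<exists>i. 1 \<le> i \<and> i \<le> m \<and> z = CV i)"
  using assms nbrs_RV[OF assms(1)] by (auto simp: nbrs_def)

lemma dg_origA: "t \<in> VA \<Longrightarrow> d \<le> dg (LV t) \<and> dg (LV t) \<le> d + 1"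
  by (simp add: deg_LV)
lemma dg_origB: "t \<in> VB \<Longrightarrow> d \<le> dg (RV t) \<and> dg (RV t) \<le> d + 1"
  by (simp add: deg_RV)

lemma nbr_dg: assumes u: "u \<in> V" and o: "(\<exists>x. u = LV x) \<or> (\<exists>x. u = RV x)" and z: "z \<in> nbrs V E u"
  shows "(d \<le> dg z \<and> dg z \<le> d + 1) \<or> 3 \<le> dg z"
proof -
  have cv: "3 \<le> dg z" if "1 \<le> i" "i \<le> m" "z = CV i" for i
    using deg_CV[OF that(1,2)] that by simp
  from o show ?thesis
  proof
    assume "\<exists>x. u = LV x"
    then obtain x where x: "u = LV x" by blast
    have xa: "x \<in> VA" using u x by simp
    have "(\<exists>t\<in>VA. z = LV t) \<or> (\<exists>i. 1 \<le> i \<and> i \<le> m \<and> z = CV i)"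
      using nbrs_LV_cases[OF xa] z x by simp
    thus ?thesis
    proof
      assume "\<exists>t\<in>VA. z = LV t"
      then obtain t where "t \<in> VA" "z = LV t" by blast
      thus ?thesis using dg_origA by simp
    next
      assume "\<exists>i. 1 \<le> i \<and> i \<le> m \<and> z = CV i"
      thus ?thesis using cv by blast
    qed
  next
    assume "\<exists>x. u = RV x"
    then obtain x where x: "u = RV x" by blast
    have xa: "x \<in> VB" using u x by simp
    have "(\<exists>t\<in>VB. z = RV t) \<or> (\<exists>i. 1 \<le> i \<and> i \<le> m \<and> z = CV i)"
      using nbrs_RV_cases[OF xa] z x by simp
    thus ?thesis
    proof
      assume "\<exists>t\<in>VB. z = RV t"
      then obtain t where "t \<in> VB" "z = RV t" by blast
      thus ?thesis using dg_origB by simp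
    next
      assume "\<exists>i. 1 \<le> i \<and> i \<le> m \<and> z = CV i"
      thus ?thesis using cv by blast
    qed
  qed
qed

lemma isC_iff: assumes u: "u \<in> V" and d: "1 \<le> d"
  shows "isCw (cc (Suc (Suc j)) u) \<longleftrightarrow> (\<exists>i. u = CV i)"
proof (cases u)
  case (LV x)
  have x: "x \<in> VA" using u LV by simp
  have "\<not> (3 \<le> dg u \<and> (\<exists>z\<in>nbrs V E u. dg z = 1))"
  proof
    assume h: "3 \<le> dg u \<and> (\<exists>z\<in>nbrs V E u. dg z = 1)"
    then obtain z where z: "z \<in> nbrs V E u" "dg z = 1" by blast
    have "2 \<le> d" using h dg_origA[OF x] LV by simp
    thus False using nbr_dg[OF u _ z(1)] LV z(2) by auto
  qed
  thus ?thesis using LV isC_alt by simp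
next
  case (RV x)
  have x: "x \<in> VB" using u RV by simp
  have "\<not> (3 \<le> dg u \<and> (\<exists>z\<in>nbrs V E u. dg z = 1))"
  proof
    assume h: "3 \<le> dg u \<and> (\<exists>z\<in>nbrs V E u. dg z = 1)"
    then obtain z where z: "z \<in> nbrs V E u" "dg z = 1" by blast
    have "2 \<le> d" using h dg_origB[OF x] RV by simp
    thus False using nbr_dg[OF u _ z(1)] RV z(2) by auto
  qed
  thus ?thesis using RV isC_alt by simp
next
  case (CV i)
  have i: "1 \<le> i" "i \<le> m" using u CV by simp_all
  have "PV i 1 \<in> nbrs V E u" using CV nbrs_CV[OF i] i by auto
  moreover have "dg (PV i 1) = 1" using deg_PV i by simp
  moreover have "3 \<le> dg u" using CV deg_CV[OF i] i by simp
  ultimately show ?thesis using CV isC_alt by blast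
next
  case (PV i j)
  have "dg u = 1" using PV u deg_PV by simp
  thus ?thesis using PV isC_alt by simp
qed

lemma isP_iff: assumes u: "u \<in> V" and d: "1 \<le> d"
  shows "isPw (cc (Suc (Suc j)) u) \<longleftrightarrow> (\<exists>i k. u = PV i k)"
proof (cases u)
  case (LV x)
  have x: "x \<in> VA" using u LV by simp
  have "\<not> (dg u = 1 \<and> (\<exists>z\<in>nbrs V E u. 3 \<le> dg z))"
  proof
    assume h: "dg u = 1 \<and> (\<exists>z\<in>nbrs V E u. 3 \<le> dg z)"
    then obtain z where z: "z \<in> nbrs V E u" "3 \<le> dg z" by blast
    have "d = 1" "col_of a m x = 0" using h d LV deg_LV[OF x] by (auto split: if_splits)
    hence "nbrs V E u = LV ` nbrs VA EA x" using LV nbrs_LV[OF x] colsetA by simp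
    then obtain t where "t \<in> nbrs VA EA x" "z = LV t" using z by auto
    hence "t \<in> VA" by (auto simp: nbrs_def)
    thus False using dg_origA[of t] \<open>z = LV t\<close> \<open>d = 1\<close> z(2) by simp
  qed
  thus ?thesis using LV isP_alt by simp
next
  case (RV x)
  have x: "x \<in> VB" using u RV by simp
  have "\<not> (dg u = 1 \<and> (\<exists>z\<in>nbrs V E u. 3 \<le> dg z))"
  proof
    assume h: "dg u = 1 \<and> (\<exists>z\<in>nbrs V E u. 3 \<le> dg z)"
    then obtain z where z: "z \<in> nbrs V E u" "3 \<le> dg z" by blast
    have "d = 1" "col_of b m x = 0" using h d RV deg_RV[OF x] by (auto split: if_splits)
    hence "nbrs V E u = RV ` nbrs VB EB x" using RV nbrs_RV[OF x] colsetB by simp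
    then obtain t where "t \<in> nbrs VB EB x" "z = RV t" using z by auto
    hence "t \<in> VB" by (auto simp: nbrs_def)
    thus False using dg_origB[of t] \<open>z = RV t\<close> \<open>d = 1\<close> z(2) by simp
  qed
  thus ?thesis using RV isP_alt by simp
next
  case (CV i)
  have i: "1 \<le> i" "i \<le> m" using u CV by simp_all
  have "dg u = i + 2" using CV deg_CV[OF i] by simp
  thus ?thesis using CV isP_alt by simp
next
  case (PV i k)
  have ik: "1 \<le> i" "i \<le> m" "1 \<le> k" "k \<le> i" using u PV by simp_all
  have "dg u = 1" using PV deg_PV[OF ik] by simp
  moreover have "CV i \<in> nbrs V E u" using PV nbrs_PV[OF ik] by simp
  moreover have "3 \<le> dg (CV i)" using deg_CV ik by simp
  ultimately show ?thesis using PV isP_alt by blast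
qed


lemma CV_nbr_LV: assumes x: "x \<in> VA"
  shows "z \<in> nbrs V E (LV x) \<and> (\<exists>i. z = CV i) \<longleftrightarrow> col_of a m x \<noteq> 0 \<and> z = CV (col_of a m x)"
  using nbrs_LV[OF x] colsetA by auto
lemma CV_nbr_RV: assumes x: "x \<in> VB"
  shows "z \<in> nbrs V E (RV x) \<and> (\<exists>i. z = CV i) \<longleftrightarrow> col_of b m x \<noteq> 0 \<and> z = CV (col_of b m x)"
  using nbrs_RV[OF x] colsetB by auto

lemma colf_gen: assumes u: "u \<in> V" and d: "1 \<le> d"
    and cn: "\<And>z. z \<in> nbrs V E u \<and> (\<exists>i. z = CV i) \<longleftrightarrow> c \<noteq> 0 \<and> z = CV c"
    and cv: "c \<noteq> 0 \<Longrightarrow> 1 \<le> c \<and> c \<le> m"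
  shows "colfw (cc (Suc (Suc (Suc j))) u) = c"
proof -
  define M where "M = sndw (cc (Suc (Suc (Suc j))) u)"
  have M: "M = image_mset (cc (Suc (Suc j))) (mset_set (nbrs V E u))" unfolding M_def by (rule sndw_cc)
  have key: "\<delta> \<in># M \<and> isCw \<delta> \<longleftrightarrow> c \<noteq> 0 \<and> \<delta> = cc (Suc (Suc j)) (CV c)" for \<delta>
  proof
    assume h: "\<delta> \<in># M \<and> isCw \<delta>"
    then obtain z where z: "z \<in> nbrs V E u" "\<delta> = cc (Suc (Suc j)) z" using M fin_nbrsV by auto
    have zV: "z \<in> V" using z(1) nbrs_sub by blast
    have "\<exists>i. z = CV i" using h z(2) isC_iff[OF zV d] by simp
    thus "c \<noteq> 0 \<and> \<delta> = cc (Suc (Suc j)) (CV c)" using cn[of z] z by auto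
  next
    assume h: "c \<noteq> 0 \<and> \<delta> = cc (Suc (Suc j)) (CV c)"
    have "CV c \<in> nbrs V E u" using cn[of "CV c"] h by simp
    moreover have "CV c \<in> V" using cv h by simp
    ultimately show "\<delta> \<in># M \<and> isCw \<delta>" using h M fin_nbrsV isC_iff[OF _ d] by auto
  qed
  show ?thesis
  proof (cases "c = 0")
    case True
    thus ?thesis using key unfolding colfw_def M_def[symmetric] by auto
  next
    case False
    have ex: "\<exists>\<delta>\<in>#M. isCw \<delta>" using key False by blast
    have "(SOME \<delta>. \<delta> \<in># M \<and> isCw \<delta>) = cc (Suc (Suc j)) (CV c)"
      using key False by simp
    moreover have "dgw (cc (Suc (Suc j)) (CV c)) = c + 2"
      using dg_cc[of "Suc j" "CV c"] deg_CV[of c] cv False by (simp del: cr.simps)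
    ultimately show ?thesis using ex unfolding colfw_def M_def[symmetric] by simp
  qed
qed

lemma colf_LV: assumes x: "x \<in> VA" and d: "1 \<le> d" shows "colfw (cc (Suc (Suc (Suc j))) (LV x)) = col_of a m x"
proof (rule colf_gen)
  show "LV x \<in> V" using x by simp
  show "1 \<le> d" by (rule d)
  show "z \<in> nbrs V E (LV x) \<and> (\<exists>i. z = CV i) \<longleftrightarrow> col_of a m x \<noteq> 0 \<and> z = CV (col_of a m x)" for z
    by (rule CV_nbr_LV[OF x])
  show "col_of a m x \<noteq> 0 \<Longrightarrow> 1 \<le> col_of a m x \<and> col_of a m x \<le> m"
    using colA_nz[of x] by simp
qed
lemma colf_RV: assumes x: "x \<in> VB" and d: "1 \<le> d" shows "colfw (cc (Suc (Suc (Suc j))) (RV x)) = col_of b m x"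
proof (rule colf_gen)
  show "RV x \<in> V" using x by simp
  show "1 \<le> d" by (rule d)
  show "z \<in> nbrs V E (RV x) \<and> (\<exists>i. z = CV i) \<longleftrightarrow> col_of b m x \<noteq> 0 \<and> z = CV (col_of b m x)" for z
    by (rule CV_nbr_RV[OF x])
  show "col_of b m x \<noteq> 0 \<Longrightarrow> 1 \<le> col_of b m x \<and> col_of b m x \<le> m"
    using colB_nz[of x] by simp
qed

definition ocol :: "nat \<Rightarrow> ('a, 'b) cv \<Rightarrow> wlc option" where
  "ocol k u = (case u of LV x \<Rightarrow> Some (cr VA EA (col_of a m) k x)
     | RV y \<Rightarrow> Some (cr VB EB (col_of b m) k y) | _ \<Rightarrow> None)"

lemma ocol_None: "ocol k u = None \<longleftrightarrow> (\<exists>i. u = CV i) \<or> (\<exists>i j. u = PV i j)"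
  by (cases u) (auto simp: ocol_def)

lemma ocol_Suc: assumes u: "u \<in> V" and nn: "ocol k u \<noteq> None"
  shows "ocol (Suc k) u = Some (WLStep (the (ocol k u)) (osm (image_mset (ocol k) (mset_set (nbrs V E u)))))"
proof (cases u)
  case (LV x)
  have x: "x \<in> VA" using u LV by simp
  define C where "C = (if col_of a m x = 0 then {} else {col_of a m x})"
  have N: "nbrs V E u = LV ` nbrs VA EA x \<union> CV ` C" using nbrs_LV[OF x] colsetA LV C_def by simp
  have "mset_set (nbrs V E u) = image_mset LV (mset_set (nbrs VA EA x)) + image_mset CV (mset_set C)"
    unfolding N by (subst mset_set_Union) (auto simp: C_def fin_nbrsA image_mset_mset_set inj_on_def)
  hence "image_mset (ocol k) (mset_set (nbrs V E u)) =
      image_mset (\<lambda>t. Some (cr VA EA (col_of a m) k t)) (mset_set (nbrs VA EA x)) + image_mset (\<lambda>_. None) (mset_set C)"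
    by (simp add: image_mset.compositionality comp_def ocol_def del: cr.simps)
  hence "osm (image_mset (ocol k) (mset_set (nbrs V E u))) = image_mset (cr VA EA (col_of a m) k) (mset_set (nbrs VA EA x))"
    by (simp add: osm_split del: cr.simps)
  thus ?thesis using LV by (simp add: ocol_def)
next
  case (RV x)
  have x: "x \<in> VB" using u RV by simp
  define C where "C = (if col_of b m x = 0 then {} else {col_of b m x})"
  have N: "nbrs V E u = RV ` nbrs VB EB x \<union> CV ` C" using nbrs_RV[OF x] colsetB RV C_def by simp
  have "mset_set (nbrs V E u) = image_mset RV (mset_set (nbrs VB EB x)) + image_mset CV (mset_set C)"
    unfolding N by (subst mset_set_Union) (auto simp: C_def fin_nbrsB image_mset_mset_set inj_on_def)
  hence "image_mset (ocol k) (mset_set (nbrs V E u)) =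
      image_mset (\<lambda>t. Some (cr VB EB (col_of b m) k t)) (mset_set (nbrs VB EB x)) + image_mset (\<lambda>_. None) (mset_set C)"
    by (simp add: image_mset.compositionality comp_def ocol_def del: cr.simps)
  hence "osm (image_mset (ocol k) (mset_set (nbrs V E u))) = image_mset (cr VB EB (col_of b m) k) (mset_set (nbrs VB EB x))"
    by (simp add: osm_split del: cr.simps)
  thus ?thesis using RV by (simp add: ocol_def)
qed (use nn in \<open>simp_all add: ocol_def\<close>)

lemma ocol0: assumes u: "u \<in> V" and d: "1 \<le> d"
  shows "ocol 0 u = (if isCw (cc 2 u) \<or> isPw (cc 2 u) then None else Some (WLInit (colfw (cc 3 u))))"
proof -
  have c2: "cc 2 u = cc (Suc (Suc 0)) u" by (simp add: numeral_2_eq_2)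
  have c3: "cc 3 u = cc (Suc (Suc (Suc 0))) u" by (simp add: numeral_3_eq_3)
  show ?thesis
    unfolding c2 c3 isC_iff[OF u d] isP_iff[OF u d]
    using u colf_LV[OF _ d, of _ 0] colf_RV[OF _ d, of _ 0] by (cases u) (auto simp: ocol_def simp del: cr.simps(2))
qed

end

primrec gg :: "nat \<Rightarrow> nat \<Rightarrow> nat \<Rightarrow> wlc" where
  "gg d 0 c = WLInit c"
| "gg d (Suc k) c = WLStep (gg d k c) (replicate_mset d (gg d k 0))"

lemma col_of_m0: "col_of f 0 x = 0" by (simp add: col_of_def)

lemma degen_cr:
  assumes srg: "srg V0 E0 n d l mu" and dm: "d = 0 \<or> m = 0"
  shows "x \<in> V0 \<Longrightarrow> cr V0 E0 (col_of f m) k x = gg d k (col_of f m x)"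
proof (induction k arbitrary: x)
  case 0 thus ?case by simp
next
  case (Suc k)
  have fin: "finite V0" and deg: "card (nbrs V0 E0 x) = d" using srg Suc.prems unfolding srg_def by auto
  have finN: "finite (nbrs V0 E0 x)" using fin by (simp add: nbrs_def)
  have sub: "nbrs V0 E0 x \<subseteq> V0" by (auto simp: nbrs_def)
  have "image_mset (cr V0 E0 (col_of f m) k) (mset_set (nbrs V0 E0 x)) = replicate_mset d (gg d k 0)"
  proof (cases "d = 0")
    case True
    hence "nbrs V0 E0 x = {}" using deg finN by simp
    thus ?thesis using True by simp
  next
    case False
    hence m0: "m = 0" using dm by simp
    have "image_mset (cr V0 E0 (col_of f m) k) (mset_set (nbrs V0 E0 x)) = image_mset (\<lambda>_. gg d k 0) (mset_set (nbrs V0 E0 x))"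
    proof (rule image_mset_cong)
      fix z assume "z \<in># mset_set (nbrs V0 E0 x)"
      hence "z \<in> V0" using sub finN by auto
      have cz: "col_of f m = (\<lambda>_. 0)" by (rule ext) (simp add: m0 col_of_def)
      show "cr V0 E0 (col_of f m) k z = gg d k 0" using Suc.IH[OF \<open>z \<in> V0\<close>] cz by simp
    qed
    thus ?thesis using deg finN by (simp add: image_mset_const_eq)
  qed
  thus ?case using Suc.IH[OF Suc.prems] by simp
qed

lemma col_mset:
  assumes fin: "finite V0" and card: "card V0 = n" and fin_in: "f ` {1..m} \<subseteq> V0" and inj: "inj_on f {1..m}"
  shows "image_mset (col_of f m) (mset_set V0) = mset_set {1..m} + replicate_mset (n - m) 0"
proof -
  define R where "R = V0 - f ` {1..m}"
  have V0: "V0 = f ` {1..m} \<union> R" using fin_in by (auto simp: R_def)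
  have "mset_set V0 = mset_set (f ` {1..m}) + mset_set R"
    unfolding V0 using fin by (subst mset_set_Union) (auto simp: R_def)
  also have "mset_set (f ` {1..m}) = image_mset f (mset_set {1..m})"
    by (rule image_mset_mset_set[OF inj, symmetric])
  finally have sp: "mset_set V0 = image_mset f (mset_set {1..m}) + mset_set R" .
  have 1: "image_mset (col_of f m) (image_mset f (mset_set {1..m})) = mset_set {1..m}"
  proof -
    have "image_mset (col_of f m) (image_mset f (mset_set {1..m})) = image_mset id (mset_set {1..m})"
      unfolding image_mset.compositionality
      by (rule image_mset_cong) (auto simp: col_of_eq[OF inj])
    thus ?thesis by simp
  qed
  have 2: "image_mset (col_of f m) (mset_set R) = replicate_mset (n - m) 0"
  proof -
    have "image_mset (col_of f m) (mset_set R) = image_mset (\<lambda>_. 0) (mset_set R)"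
    proof (rule image_mset_cong)
      fix z assume "z \<in># mset_set R"
      hence z: "z \<in> R" using fin by (simp add: R_def)
      show "col_of f m z = 0"
      proof (rule ccontr)
        assume "col_of f m z \<noteq> 0"
        hence "1 \<le> col_of f m z \<and> col_of f m z \<le> m \<and> f (col_of f m z) = z"
          using col_of_range[OF inj, of z] by (simp only: simp_thms)
        hence "z \<in> f ` {1..m}" by (metis atLeastAtMost_iff image_eqI)
        thus False using z by (simp add: R_def)
      qed
    qed
    moreover have "card R = n - m"
      using card fin_in inj fin by (simp add: R_def card_Diff_subset card_image finite_subset)
    ultimately show ?thesis using fin by (simp add: image_mset_const_eq R_def)
  qed
  show ?thesis using sp 1 2 by simp
qed

lemma degen_WL1:
  assumes srgA: "srg VA EA n d l mu" and srgB: "srg VB EB n d l mu"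
    and a_in: "a ` {1..m} \<subseteq> VA" and a_inj: "inj_on a {1..m}"
    and b_in: "b ` {1..m} \<subseteq> VB" and b_inj: "inj_on b {1..m}"
    and dm: "d = 0 \<or> m = 0"
  shows "WL1 VA EA (col_of a m) = WL1 VB EB (col_of b m)"
proof -
  have fA: "finite VA" "card VA = n" and fB: "finite VB" "card VB = n" using srgA srgB unfolding srg_def by auto
  have "WL1 VA EA (col_of a m) = image_mset (gg d n) (image_mset (col_of a m) (mset_set VA))"
    unfolding WL1_def image_mset.compositionality
    by (rule image_mset_cong) (use degen_cr[OF srgA dm] fA in auto)
  also have "\<dots> = image_mset (gg d n) (mset_set {1..m} + replicate_mset (n - m) 0)"
    using col_mset[OF fA a_in a_inj] by simp
  also have "\<dots> = image_mset (gg d n) (image_mset (col_of b m) (mset_set VB))"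
    using col_mset[OF fB b_in b_inj] by simp
  also have "\<dots> = WL1 VB EB (col_of b m)"
    unfolding WL1_def image_mset.compositionality
    by (rule image_mset_cong) (use degen_cr[OF srgB dm] fB in auto)
  finally show ?thesis .
qed


context cg begin

lemma ocol_trunc: "ocol j u = map_option (fstw ^^ i) (ocol (j + i) u)"
  by (cases u) (auto simp: ocol_def fstw_cr)

end

context cg2 begin

lemma claim: assumes d: "1 \<le> d"
  shows "u \<in> G.V \<Longrightarrow> u' \<in> H.V \<Longrightarrow> G.cc (k + 3) u = H.cc (k + 3) u' \<Longrightarrow> G.ocol k u = H.ocol k u'"
proof (induction k arbitrary: u u')
  case 0
  have e3: "G.cc 3 u = H.cc 3 u'" using 0 by simp
  have e2: "G.cc 2 u = H.cc 2 u'" using cr_down[OF e3] by simp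
  show ?case using G.ocol0[OF 0(1) d] H.ocol0[OF 0(2) d] e2 e3 by simp
next
  case (Suc k)
  have eq: "G.cc (Suc (k + 3)) u = H.cc (Suc (k + 3)) u'" using Suc.prems(3) by simp
  have ek: "G.cc (k + 3) u = H.cc (k + 3) u'"
    and en: "image_mset (G.cc (k + 3)) (mset_set (nbrs G.V G.E u)) = image_mset (H.cc (k + 3)) (mset_set (nbrs H.V H.E u'))"
    using eq by (simp_all only: cr_Suc_eq)
  have ih: "G.ocol k u = H.ocol k u'" by (rule Suc.IH[OF Suc.prems(1,2) ek])
  show ?case
  proof (cases "G.ocol k u = None")
    case True
    hence "H.ocol k u' = None" using ih by simp
    thus ?thesis using True G.ocol_None H.ocol_None by metis
  next
    case False
    hence F2: "H.ocol k u' \<noteq> None" using ih by simp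
    have nb: "image_mset (G.ocol k) (mset_set (nbrs G.V G.E u)) = image_mset (H.ocol k) (mset_set (nbrs H.V H.E u'))"
    proof (rule mset_transfer[OF G.fin_nbrsV H.fin_nbrsV en])
      fix z z' assume z: "z \<in> nbrs G.V G.E u" and z': "z' \<in> nbrs H.V H.E u'"
        and "G.cc (k + 3) z = H.cc (k + 3) z'"
      moreover have "z \<in> G.V" using z G.nbrs_sub by blast
      moreover have "z' \<in> H.V" using z' H.nbrs_sub by blast
      ultimately show "G.ocol k z = H.ocol k z'" using Suc.IH by blast
    qed
    show ?thesis using G.ocol_Suc[OF Suc.prems(1) False] H.ocol_Suc[OF Suc.prems(2) F2] ih nb by simp
  qed
qed

lemma part1: assumes ne: "WL1 VA EA (col_of a m) \<noteq> WL1 VB EB (col_of b m)"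
  shows "WL1 G.V G.E (\<lambda>_. 0) \<noteq> WL1 H.V H.E (\<lambda>_. 0)"
proof
  assume eqW: "WL1 G.V G.E (\<lambda>_. 0) = WL1 H.V H.E (\<lambda>_. 0)"
  have dm: "1 \<le> d \<and> 1 \<le> m"
  proof (rule ccontr)
    assume "\<not> (1 \<le> d \<and> 1 \<le> m)"
    hence "d = 0 \<or> m = 0" by auto
    thus False using degen_WL1[OF G.srgA G.srgB G.a_in G.a_inj G.b_in G.b_inj] ne by blast
  qed
  define N where "N = card G.V"
  have NH: "card H.V = N"
  proof -
    have "size (WL1 G.V G.E (\<lambda>_. 0)) = size (WL1 H.V H.E (\<lambda>_. 0))" using eqW by simp
    thus ?thesis unfolding N_def WL1_def by simp
  qed
  have Nn: "n + 3 \<le> N"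
  proof -
    have b1: "b 1 \<in> VB" using G.b_inV dm by simp
    have sub: "insert (CV 1) (insert (PV 1 1) (insert (RV (b 1)) (LV ` VA))) \<subseteq> G.V"
      using dm b1 by auto
    have "card (insert (CV 1) (insert (PV 1 1) (insert (RV (b 1)) (LV ` VA)))) = n + 3"
      using G.finA G.cardA by (auto simp: card_insert_if card_image inj_on_def)
    thus ?thesis using card_mono[OF G.finV sub] unfolding N_def by simp
  qed
  define k where "k = N - 3"
  have Nk: "N = k + 3" using Nn unfolding k_def by simp
  have e1: "image_mset (G.cc (k + 3)) (mset_set G.V) = image_mset (H.cc (k + 3)) (mset_set H.V)"
    using eqW unfolding WL1_def N_def[symmetric] NH Nk .
  have e2: "image_mset (G.ocol k) (mset_set G.V) = image_mset (H.ocol k) (mset_set H.V)"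
    by (rule mset_transfer[OF G.finV H.finV e1]) (use claim dm in blast)
  have kn: "n \<le> k" using Nn Nk by simp
  then obtain i where ki: "k = n + i" using le_Suc_ex by blast
  have e3: "image_mset (G.ocol n) (mset_set G.V) = image_mset (H.ocol n) (mset_set H.V)"
  proof -
    have "image_mset (G.ocol n) (mset_set G.V) = image_mset (map_option (fstw ^^ i)) (image_mset (G.ocol k) (mset_set G.V))"
      unfolding image_mset.compositionality comp_def ki by (rule image_mset_cong) (rule G.ocol_trunc)
    also have "\<dots> = image_mset (map_option (fstw ^^ i)) (image_mset (H.ocol k) (mset_set H.V))" using e2 by simp
    also have "\<dots> = image_mset (H.ocol n) (mset_set H.V)"
      unfolding image_mset.compositionality comp_def ki by (rule image_mset_cong) (rule H.ocol_trunc[symmetric])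
    finally show ?thesis .
  qed
  have oL: "G.ocol n \<circ> LV = (\<lambda>x. Some (cA n x))" "H.ocol n \<circ> LV = (\<lambda>x. Some (cA n x))"
    "G.ocol n \<circ> RV = (\<lambda>x. Some (cB n x))" "H.ocol n \<circ> RV = (\<lambda>x. Some (cA n x))"
    "G.ocol n \<circ> cpv = (\<lambda>_. None)" "H.ocol n \<circ> cpv = (\<lambda>_. None)"
    by (auto simp: G.ocol_def H.ocol_def del: cr.simps)
  have "image_mset (\<lambda>x. Some (cA n x)) (mset_set VA) + image_mset (\<lambda>x. Some (cB n x)) (mset_set VB)
      + image_mset (\<lambda>_. None) (mset_set (CPI m))
      = image_mset (\<lambda>x. Some (cA n x)) (mset_set VA) + image_mset (\<lambda>x. Some (cA n x)) (mset_set VA)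
      + image_mset (\<lambda>_. None) (mset_set (CPI m))"
    using e3 mset_constr_V[OF G.finA G.finB, of "G.ocol n" m] mset_constr_V[OF G.finA G.finA, of "H.ocol n" m]
    unfolding oL by simp
  hence "image_mset (\<lambda>x. Some (cB n x)) (mset_set VB) = image_mset (\<lambda>x. Some (cA n x)) (mset_set VA)"
    by simp
  hence "image_mset the (image_mset (\<lambda>x. Some (cB n x)) (mset_set VB)) = image_mset the (image_mset (\<lambda>x. Some (cA n x)) (mset_set VA))"
    by simp
  hence "image_mset (cB n) (mset_set VB) = image_mset (cA n) (mset_set VA)"
    by (simp add: image_mset.compositionality comp_def del: cr.simps)
  hence "WL1 VB EB (col_of b m) = WL1 VA EA (col_of a m)"
    unfolding WL1_def G.cardA G.cardB .
  thus False using ne by simp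
qed

end

theorem lemma6p3:
  fixes VA :: "'a set" and EA :: "'a \<Rightarrow> 'a \<Rightarrow> bool"
    and VB :: "'b set" and EB :: "'b \<Rightarrow> 'b \<Rightarrow> bool"
    and a :: "nat \<Rightarrow> 'a" and b :: "nat \<Rightarrow> 'b"
    and n d l mu m :: nat
  assumes srgA: "srg VA EA n d l mu"
    and srgB: "srg VB EB n d l mu"
    and a_in: "a ` {1..m} \<subseteq> VA" and a_inj: "inj_on a {1..m}"
    and b_in: "b ` {1..m} \<subseteq> VB" and b_inj: "inj_on b {1..m}"
  shows "(WL1 VA EA (col_of a m) \<noteq> WL1 VB EB (col_of b m) \<longrightarrow>
            WL1 (constr_V VA VB m) (constr_E EA EB a b m) (\<lambda>_. 0)
              \<noteq> WL1 (constr_V VA VA m) (constr_E EA EA a a m) (\<lambda>_. 0))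
       \<and> (\<forall>r\<ge>1. image_mset (cr VA EA (col_of a m) r) (mset_set VA)
                 = image_mset (cr VB EB (col_of b m) r) (mset_set VB) \<longrightarrow>
            omega_ms (constr_V VA VB m) (constr_E EA EB a b m) (r - 1)
              = omega_ms (constr_V VA VA m) (constr_E EA EA a a m) (r - 1))"
  proof -
  interpret cg2 VA EA VB EB a b m n d l mu
    by unfold_locales (rule srgA srgB a_in a_inj b_in b_inj)+
  show ?thesis
  proof (intro conjI allI impI)
    assume "WL1 VA EA (col_of a m) \<noteq> WL1 VB EB (col_of b m)"
    thus "WL1 (constr_V VA VB m) (constr_E EA EB a b m) (\<lambda>_. 0)
              \<noteq> WL1 (constr_V VA VA m) (constr_E EA EA a a m) (\<lambda>_. 0)"
      by (rule part1)
  next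
    fix r :: nat
    assume r: "r \<ge> 1"
      and h: "image_mset (cr VA EA (col_of a m) r) (mset_set VA) = image_mset (cr VB EB (col_of b m) r) (mset_set VB)"
    show "omega_ms (constr_V VA VB m) (constr_E EA EB a b m) (r - 1)
              = omega_ms (constr_V VA VA m) (constr_E EA EA a a m) (r - 1)"
      by (rule part2[OF h[symmetric] r])
  qed
qed

end
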